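(* Let $(\Omega,\Sigma,\mathbb{P})$ be a probability space and let $X$ be an ideal of $L_0(\Sigma)$ which contains the constant functions and admits a strictly positive order continuous linear functional. Let $f\in X$ with $f\ge 0$, and let $O_f=\operatorname{span}\{\mathbb 1,(f-k)^+:k\in\mathbb{R}\}$. For $g\in X$, the following are equivalent: (a) $g\in L_0(\sigma(f))\cap X$; (b) $g$ belongs to the closure of $O_f$ in the $\sigma(X,X_n^\sim)$-topology; (c) there exists a sequence $(g_n)$ in $O_f$ such that $g_n\to g$ almost everywhere.
   Context: $L_0(\Sigma)$ is the vector lattice of real-valued measurable functions modulo a.e. equality with the a.e. order; an ideal is a subspace $X$ with $|x|\le|y|$, $y\in X$ implying $x\in X$. $\mathbb 1$ is the constant one function. A net $x_\alpha$ converges in order to $x$ in $X$ if there is a net $z_\beta\downarrow 0$ in $X$ such that for every $\beta$ there is $\alpha_0$ with $|x_\alpha-x|\le z_\beta$ for $\alpha\ge\alpha_0$. A linear functional $\phi$ on $X$ is order continuous if $\phi(x_\alpha)\to 0$ whenever $x_\alpha\to 0$ in order in $X$; it is strictly positive if $\phi(x)>0$ whenever $x\ge0$, $x\neq 0$. $X_n^\sim$ denotes the space of all order continuous linear functionals on $X$, and $\sigma(X,X_n^\sim)$ is the weak topology on $X$ induced by $X_n^\sim$. $\sigma(f)$ is the smallest sub-$\sigma$-algebra of $\Sigma$ making $f$ measurable and containing all $\mathbb{P}$-null sets; $L_0(\sigma(f))$ is the set of functions in $L_0(\Sigma)$ measurable with respect to $\sigma(f)$. *)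

theory Defs
  imports "HOL-Probability.Probability"
begin

text \<open>Elements of L_0 are represented by measurable functions; an ideal X of L_0 is
represented by the set of all representatives of its elements (so X is saturated
under a.e. equality).  The order is the a.e. order.\<close>

definition L0_ideal :: "'a measure \<Rightarrow> ('a \<Rightarrow> real) set \<Rightarrow> bool" where
  "L0_ideal M X \<longleftrightarrow>
     X \<subseteq> borel_measurable M \<and>
     (\<lambda>_. 0) \<in> X \<and>
     (\<forall>x\<in>X. \<forall>y\<in>X. (\<lambda>\<omega>. x \<omega> + y \<omega>) \<in> X) \<and>
     (\<forall>c::real. \<forall>x\<in>X. (\<lambda>\<omega>. c * x \<omega>) \<in> X) \<and>
     (\<forall>x y. x \<in> borel_measurable M \<longrightarrow> y \<in> X \<longrightarrow>
        (AE \<omega> in M. \<bar>x \<omega>\<bar> \<le> \<bar>y \<omega>\<bar>) \<longrightarrow> x \<in> X)"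

text \<open>A net z decreasing to 0 in X, represented by its range Z: a nonempty
downward directed subset of X whose infimum in X (a.e. order) is 0.\<close>

definition decr_to_zero :: "'a measure \<Rightarrow> ('a \<Rightarrow> real) set \<Rightarrow> ('a \<Rightarrow> real) set \<Rightarrow> bool" where
  "decr_to_zero M X Z \<longleftrightarrow>
     Z \<subseteq> X \<and> Z \<noteq> {} \<and>
     (\<forall>z1\<in>Z. \<forall>z2\<in>Z. \<exists>z3\<in>Z. (AE \<omega> in M. z3 \<omega> \<le> z1 \<omega>) \<and> (AE \<omega> in M. z3 \<omega> \<le> z2 \<omega>)) \<and>
     (\<forall>z\<in>Z. AE \<omega> in M. 0 \<le> z \<omega>) \<and>
     (\<forall>w\<in>X. (\<forall>z\<in>Z. AE \<omega> in M. w \<omega> \<le> z \<omega>) \<longrightarrow> (AE \<omega> in M. w \<omega> \<le> 0))"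

text \<open>Order convergence in X of a net, the net being represented by its
(pushed-forward) eventually-filter F on functions.\<close>

definition order_conv :: "'a measure \<Rightarrow> ('a \<Rightarrow> real) set \<Rightarrow> ('a \<Rightarrow> real) filter \<Rightarrow> ('a \<Rightarrow> real) \<Rightarrow> bool" where
  "order_conv M X F x0 \<longleftrightarrow> x0 \<in> X \<and>
     (\<exists>Z. decr_to_zero M X Z \<and>
        (\<forall>z\<in>Z. eventually (\<lambda>x. AE \<omega> in M. \<bar>x \<omega> - x0 \<omega>\<bar> \<le> z \<omega>) F))"

definition lin_functional :: "'a measure \<Rightarrow> ('a \<Rightarrow> real) set \<Rightarrow> (('a \<Rightarrow> real) \<Rightarrow> real) \<Rightarrow> bool" where
  "lin_functional M X \<phi> \<longleftrightarrow>
     (\<forall>x\<in>X. \<forall>y\<in>X. (AE \<omega> in M. x \<omega> = y \<omega>) \<longrightarrow> \<phi> x = \<phi> y) \<and>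
     (\<forall>x\<in>X. \<forall>y\<in>X. \<phi> (\<lambda>\<omega>. x \<omega> + y \<omega>) = \<phi> x + \<phi> y) \<and>
     (\<forall>c::real. \<forall>x\<in>X. \<phi> (\<lambda>\<omega>. c * x \<omega>) = c * \<phi> x)"

definition order_continuous :: "'a measure \<Rightarrow> ('a \<Rightarrow> real) set \<Rightarrow> (('a \<Rightarrow> real) \<Rightarrow> real) \<Rightarrow> bool" where
  "order_continuous M X \<phi> \<longleftrightarrow>
     (\<forall>F. eventually (\<lambda>x. x \<in> X) F \<longrightarrow> order_conv M X F (\<lambda>_. 0) \<longrightarrow> (\<phi> \<longlongrightarrow> 0) F)"

definition strictly_positive :: "'a measure \<Rightarrow> ('a \<Rightarrow> real) set \<Rightarrow> (('a \<Rightarrow> real) \<Rightarrow> real) \<Rightarrow> bool" where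
  "strictly_positive M X \<phi> \<longleftrightarrow>
     (\<forall>x\<in>X. (AE \<omega> in M. 0 \<le> x \<omega>) \<longrightarrow> \<not> (AE \<omega> in M. x \<omega> = 0) \<longrightarrow> \<phi> x > 0)"

definition order_dual_n :: "'a measure \<Rightarrow> ('a \<Rightarrow> real) set \<Rightarrow> (('a \<Rightarrow> real) \<Rightarrow> real) set" where
  "order_dual_n M X = {\<phi>. lin_functional M X \<phi> \<and> order_continuous M X \<phi>}"

definition weak_top :: "'a measure \<Rightarrow> ('a \<Rightarrow> real) set \<Rightarrow> ('a \<Rightarrow> real) topology" where
  "weak_top M X = topology_generated_by
     (insert X {{x \<in> X. \<phi> x \<in> U} | \<phi> U. \<phi> \<in> order_dual_n M X \<and> open U})"

definition sigma_of :: "'a measure \<Rightarrow> ('a \<Rightarrow> real) \<Rightarrow> 'a measure" where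
  "sigma_of M f = sigma (space M) ({f -` B \<inter> space M | B. B \<in> sets borel} \<union> null_sets M)"

definition O_span :: "('a \<Rightarrow> real) \<Rightarrow> ('a \<Rightarrow> real) set" where
  "O_span f = {(\<lambda>\<omega>. c + (\<Sum>k\<in>K. a k * max (f \<omega> - k) 0)) | c a K. finite K}"

end

theory Submission
  imports Defs
begin


locale stg =
  fixes M :: "'a measure" and X :: "('a \<Rightarrow> real) set" and f :: "'a \<Rightarrow> real"
  assumes prob: "prob_space M" and ideal: "L0_ideal M X"
    and cst: "\<forall>c::real. (\<lambda>_. c) \<in> X" and fX: "f \<in> X"
begin

lemma X_meas: "x \<in> X \<Longrightarrow> x \<in> borel_measurable M"
  using ideal unfolding L0_ideal_def by blast

lemma X_add: "x \<in> X \<Longrightarrow> y \<in> X \<Longrightarrow> (\<lambda>\<omega>. x \<omega> + y \<omega>) \<in> X"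
  using ideal unfolding L0_ideal_def by blast

lemma X_smul: "x \<in> X \<Longrightarrow> (\<lambda>\<omega>. c * x \<omega>) \<in> X"
  using ideal unfolding L0_ideal_def by blast

lemma X_dom: "x \<in> borel_measurable M \<Longrightarrow> y \<in> X \<Longrightarrow> (AE \<omega> in M. \<bar>x \<omega>\<bar> \<le> \<bar>y \<omega>\<bar>) \<Longrightarrow> x \<in> X"
  using ideal unfolding L0_ideal_def by blast

lemma X_const: "(\<lambda>_. c) \<in> X"
  using cst by blast

lemma X_diff: "x \<in> X \<Longrightarrow> y \<in> X \<Longrightarrow> (\<lambda>\<omega>. x \<omega> - y \<omega>) \<in> X"
  using X_add[of x "\<lambda>\<omega>. (-1) * y \<omega>"] X_smul[of y "-1"] by simp

lemma X_abs: assumes "x \<in> X" shows "(\<lambda>\<omega>. \<bar>x \<omega>\<bar>) \<in> X"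
proof (rule X_dom[OF _ assms])
  show "(\<lambda>\<omega>. \<bar>x \<omega>\<bar>) \<in> borel_measurable M" using X_meas[OF assms] by measurable
qed auto

lemma X_sum: "finite I \<Longrightarrow> (\<And>i. i \<in> I \<Longrightarrow> h i \<in> X) \<Longrightarrow> (\<lambda>\<omega>. \<Sum>i\<in>I. c i * h i \<omega>) \<in> X"
proof (induction I rule: finite_induct)
  case empty then show ?case using X_const[of 0] by simp
next
  case (insert a I)
  then show ?case using X_add[OF X_smul[of "h a" "c a"], of "\<lambda>\<omega>. \<Sum>i\<in>I. c i * h i \<omega>"]
    by simp
qed

lemma f_meas: "f \<in> borel_measurable M" using X_meas fX .

lemma maxf_X: "(\<lambda>\<omega>. max (f \<omega> - k) 0) \<in> X"
proof (rule X_dom[of _ "\<lambda>\<omega>. \<bar>f \<omega>\<bar> + \<bar>k\<bar>"])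
  show "(\<lambda>\<omega>. max (f \<omega> - k) 0) \<in> borel_measurable M" using f_meas by measurable
  show "(\<lambda>\<omega>. \<bar>f \<omega>\<bar> + \<bar>k\<bar>) \<in> X" using X_add[OF X_abs[OF fX] X_const] .
  show "AE \<omega> in M. \<bar>max (f \<omega> - k) 0\<bar> \<le> \<bar>\<bar>f \<omega>\<bar> + \<bar>k\<bar>\<bar>" by (rule AE_I2) auto
qed

lemma O_X: "O_span f \<subseteq> X"
proof
  fix x assume "x \<in> O_span f"
  then obtain c a K where x: "x = (\<lambda>\<omega>. c + (\<Sum>k\<in>K. a k * max (f \<omega> - k) 0))" and K: "finite K"
    unfolding O_span_def by blast
  show "x \<in> X" unfolding x using X_add[OF X_const X_sum[OF K maxf_X, of a]] by simp
qed

end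

lemma O_const: "(\<lambda>_. c) \<in> O_span f"
  unfolding O_span_def by (rule CollectI, rule exI[of _ c], rule exI[of _ "\<lambda>_. 0"], rule exI[of _ "{}"]) auto

lemma O_smul: assumes "x \<in> O_span f" shows "(\<lambda>\<omega>. r * x \<omega>) \<in> O_span f"
proof -
  obtain c a K where x: "x = (\<lambda>\<omega>. c + (\<Sum>k\<in>K. a k * max (f \<omega> - k) 0))" and K: "finite K"
    using assms unfolding O_span_def by blast
  have "(\<lambda>\<omega>. r * x \<omega>) = (\<lambda>\<omega>. r * c + (\<Sum>k\<in>K. (r * a k) * max (f \<omega> - k) 0))"
    unfolding x by (auto simp: algebra_simps sum_distrib_left)
  then show ?thesis unfolding O_span_def using K
    by (intro CollectI exI[of _ "r*c"] exI[of _ "\<lambda>k. r * a k"] exI[of _ K]) auto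
qed

lemma O_add: assumes "x \<in> O_span f" "y \<in> O_span f" shows "(\<lambda>\<omega>. x \<omega> + y \<omega>) \<in> O_span f"
proof -
  obtain c a K where x: "x = (\<lambda>\<omega>. c + (\<Sum>k\<in>K. a k * max (f \<omega> - k) 0))" and K: "finite K"
    using assms unfolding O_span_def by blast
  obtain d b L where y: "y = (\<lambda>\<omega>. d + (\<Sum>k\<in>L. b k * max (f \<omega> - k) 0))" and L: "finite L"
    using assms unfolding O_span_def by blast
  define e where "e = (\<lambda>k. (if k \<in> K then a k else 0) + (if k \<in> L then b k else 0))"
  have s1: "(\<Sum>k\<in>K. a k * h k) = (\<Sum>k\<in>K \<union> L. (if k \<in> K then a k else 0) * h k)" for h :: "real \<Rightarrow> real"
    by (rule sum.mono_neutral_cong_left) (use K L in auto)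
  have s2: "(\<Sum>k\<in>L. b k * h k) = (\<Sum>k\<in>K \<union> L. (if k \<in> L then b k else 0) * h k)" for h :: "real \<Rightarrow> real"
    by (rule sum.mono_neutral_cong_left) (use K L in auto)
  have "(\<lambda>\<omega>. x \<omega> + y \<omega>) = (\<lambda>\<omega>. (c + d) + (\<Sum>k\<in>K \<union> L. e k * max (f \<omega> - k) 0))"
    unfolding x y e_def
    by (auto simp: s1[of "\<lambda>k. max (f _ - k) 0"] s2[of "\<lambda>k. max (f _ - k) 0"] distrib_right sum.distrib)
  then show ?thesis unfolding O_span_def using K L by blast
qed

context stg begin

lemma lf_zero: "lin_functional M X \<phi> \<Longrightarrow> x \<in> X \<Longrightarrow> \<phi> (\<lambda>_. 0) = 0"
proof -
  assume a: "lin_functional M X \<phi>" "x \<in> X"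
  have "\<phi> (\<lambda>\<omega>. 0 * x \<omega>) = 0 * \<phi> x" using a unfolding lin_functional_def by blast
  then show ?thesis by simp
qed

lemma lf_add: "lin_functional M X \<phi> \<Longrightarrow> x \<in> X \<Longrightarrow> y \<in> X \<Longrightarrow> \<phi> (\<lambda>\<omega>. x \<omega> + y \<omega>) = \<phi> x + \<phi> y"
  unfolding lin_functional_def by blast

lemma lf_smul: "lin_functional M X \<phi> \<Longrightarrow> x \<in> X \<Longrightarrow> \<phi> (\<lambda>\<omega>. c * x \<omega>) = c * \<phi> x"
  unfolding lin_functional_def by blast

lemma lf_ae: "lin_functional M X \<phi> \<Longrightarrow> x \<in> X \<Longrightarrow> y \<in> X \<Longrightarrow> (AE \<omega> in M. x \<omega> = y \<omega>) \<Longrightarrow> \<phi> x = \<phi> y"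
  unfolding lin_functional_def by blast

lemma lf_diff: "lin_functional M X \<phi> \<Longrightarrow> x \<in> X \<Longrightarrow> y \<in> X \<Longrightarrow> \<phi> (\<lambda>\<omega>. x \<omega> - y \<omega>) = \<phi> x - \<phi> y"
  using lf_add[of \<phi> x "\<lambda>\<omega>. (-1) * y \<omega>"] lf_smul[of \<phi> y "-1"] X_smul[of y "-1"] by simp

lemma lf_sum: assumes "lin_functional M X \<phi>" "finite I" "\<And>i. i \<in> I \<Longrightarrow> h i \<in> X" shows
   "\<phi> (\<lambda>\<omega>. \<Sum>i\<in>I. c i * h i \<omega>) = (\<Sum>i\<in>I. c i * \<phi> (h i))"
  using assms(2,3) proof (induction I rule: finite_induct)
  case empty then show ?case using lf_zero[OF assms(1) fX] by simp
next
  case (insert a I)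
  have "\<phi> (\<lambda>\<omega>. \<Sum>i\<in>insert a I. c i * h i \<omega>) = \<phi> (\<lambda>\<omega>. c a * h a \<omega> + (\<Sum>i\<in>I. c i * h i \<omega>))"
    using insert by simp
  also have "\<dots> = c a * \<phi> (h a) + \<phi> (\<lambda>\<omega>. \<Sum>i\<in>I. c i * h i \<omega>)"
  proof -
    have "(\<lambda>\<omega>. c a * h a \<omega>) \<in> X" using insert X_smul by simp
    moreover have "(\<lambda>\<omega>. \<Sum>i\<in>I. c i * h i \<omega>) \<in> X" using insert X_sum[of I h c] by simp
    ultimately show ?thesis using lf_add[OF assms(1)] lf_smul[OF assms(1)] insert by simp
  qed
  finally show ?case using insert by simp
qed

end



context stg begin

lemma oc_seq:
  assumes \<phi>: "\<phi> \<in> order_dual_n M X"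
    and ys: "\<And>n. ys n \<in> X" and y: "y \<in> X" and u: "u \<in> X"
    and conv: "AE \<omega> in M. (\<lambda>n. ys n \<omega>) \<longlonglongrightarrow> y \<omega>"
    and dom: "\<And>n. AE \<omega> in M. \<bar>ys n \<omega>\<bar> \<le> \<bar>u \<omega>\<bar>"
  shows "(\<lambda>n. \<phi> (ys n)) \<longlonglongrightarrow> \<phi> y"
proof -
  have lf: "lin_functional M X \<phi>" and oc: "order_continuous M X \<phi>"
    using \<phi> unfolding order_dual_n_def by auto
  define d where "d n = (\<lambda>\<omega>. ys n \<omega> - y \<omega>)" for n
  define c where "c = (\<lambda>\<omega>. \<bar>u \<omega>\<bar> + \<bar>y \<omega>\<bar>)"
  define z where "z n = (\<lambda>\<omega>. SUP m\<in>{n..}. min \<bar>d m \<omega>\<bar> (c \<omega>))" for n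
  have dX: "d n \<in> X" for n unfolding d_def using X_diff[OF ys y] .
  have cX: "c \<in> X" unfolding c_def using X_add[OF X_abs[OF u] X_abs[OF y]] .
  have c0: "0 \<le> c \<omega>" for \<omega> unfolding c_def by simp
  have bdd: "bdd_above ((\<lambda>m. min \<bar>d m \<omega>\<bar> (c \<omega>)) ` {n..})" for n \<omega>
    by (rule bdd_aboveI[of _ "c \<omega>"]) auto
  have z_ge: "min \<bar>d m \<omega>\<bar> (c \<omega>) \<le> z n \<omega>" if "n \<le> m" for n m \<omega>
    unfolding z_def by (rule cSUP_upper[OF _ bdd]) (use that in auto)
  have z_le: "z n \<omega> \<le> e" if "\<And>m. n \<le> m \<Longrightarrow> min \<bar>d m \<omega>\<bar> (c \<omega>) \<le> e" for n \<omega> e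
    unfolding z_def by (rule cSUP_least) (use that in auto)
  have z0: "0 \<le> z n \<omega>" for n \<omega> using z_ge[of n n \<omega>] c0[of \<omega>] by (meson abs_ge_zero min.boundedI order_refl order_trans)
  have zc: "z n \<omega> \<le> c \<omega>" for n \<omega> by (rule z_le) auto
  have z_meas: "z n \<in> borel_measurable M" for n
    unfolding z_def
  proof (rule borel_measurable_cSUP)
    show "countable {n..}" by simp
    fix m show "(\<lambda>x. min \<bar>d m x\<bar> (c x)) \<in> borel_measurable M"
      using X_meas[OF dX[of m]] X_meas[OF cX] by measurable
  qed (rule bdd)
  have zX: "z n \<in> X" for n
    by (rule X_dom[OF z_meas cX]) (auto intro!: AE_I2 simp: abs_of_nonneg z0 c0 zc)
  have z_mono: "z m \<omega> \<le> z n \<omega>" if "n \<le> m" for n m \<omega>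
    by (rule z_le) (use that z_ge in \<open>meson order_trans\<close>)
  have dc: "AE \<omega> in M. \<forall>n. \<bar>d n \<omega>\<bar> \<le> c \<omega>"
    unfolding AE_all_countable
  proof
    fix n show "AE \<omega> in M. \<bar>d n \<omega>\<bar> \<le> c \<omega>"
      using dom[of n] by eventually_elim (auto simp: d_def c_def)
  qed
  define Z where "Z = range z"
  have dz: "decr_to_zero M X Z"
    unfolding decr_to_zero_def
  proof (intro conjI ballI impI)
    show "Z \<subseteq> X" using zX unfolding Z_def by auto
    show "Z \<noteq> {}" unfolding Z_def by auto
  next
    fix z1 z2 assume "z1 \<in> Z" "z2 \<in> Z"
    then obtain n1 n2 where "z1 = z n1" "z2 = z n2" unfolding Z_def by auto
    then show "\<exists>z3\<in>Z. (AE \<omega> in M. z3 \<omega> \<le> z1 \<omega>) \<and> (AE \<omega> in M. z3 \<omega> \<le> z2 \<omega>)"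
      unfolding Z_def by (intro bexI[of _ "z (max n1 n2)"]) (auto intro!: AE_I2 z_mono)
  next
    fix zz assume "zz \<in> Z" then show "AE \<omega> in M. 0 \<le> zz \<omega>" unfolding Z_def using z0 by auto
  next
    fix w assume "w \<in> X" and wz: "\<forall>zz\<in>Z. AE \<omega> in M. w \<omega> \<le> zz \<omega>"
    then have "AE \<omega> in M. \<forall>n. w \<omega> \<le> z n \<omega>" unfolding AE_all_countable Z_def by auto
    then show "AE \<omega> in M. w \<omega> \<le> 0" using conv
    proof eventually_elim
      case (elim \<omega>)
      show "w \<omega> \<le> 0"
      proof (rule ccontr)
        assume "\<not> w \<omega> \<le> 0"
        then have "0 < w \<omega> / 2" by simp
        with elim(2) obtain N where N: "\<And>m. N \<le> m \<Longrightarrow> norm (ys m \<omega> - y \<omega>) < w \<omega> / 2"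
          unfolding LIMSEQ_iff by blast
        have "z N \<omega> \<le> w \<omega> / 2"
        proof (rule z_le)
          fix m assume "N \<le> m"
          then have "\<bar>d m \<omega>\<bar> \<le> w \<omega> / 2" using N[of m] by (simp add: d_def)
          then show "min \<bar>d m \<omega>\<bar> (c \<omega>) \<le> w \<omega> / 2" by (simp add: min.coboundedI1)
        qed
        moreover have "w \<omega> \<le> z N \<omega>" using elim(1) by blast
        ultimately show False using \<open>0 < w \<omega> / 2\<close> by linarith
      qed
    qed
  qed
  define F where "F = filtermap d sequentially"
  have "order_conv M X F (\<lambda>_. 0)"
    unfolding order_conv_def
  proof (intro conjI exI[of _ Z])
    show "(\<lambda>_. 0) \<in> X" by (rule X_const)
    show "decr_to_zero M X Z" by (rule dz)
    show "\<forall>zz\<in>Z. \<forall>\<^sub>F x in F. AE \<omega> in M. \<bar>x \<omega> - 0\<bar> \<le> zz \<omega>"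
    proof
      fix zz assume "zz \<in> Z"
      then obtain N where zz: "zz = z N" unfolding Z_def by auto
      show "\<forall>\<^sub>F x in F. AE \<omega> in M. \<bar>x \<omega> - 0\<bar> \<le> zz \<omega>"
        unfolding F_def eventually_filtermap eventually_sequentially zz
      proof (intro exI[of _ N] allI impI)
        fix n assume "N \<le> n"
        show "AE \<omega> in M. \<bar>d n \<omega> - 0\<bar> \<le> z N \<omega>"
          using dc by eventually_elim (use z_ge[OF \<open>N \<le> n\<close>] in \<open>metis diff_zero min.absorb1\<close>)
      qed
    qed
  qed
  moreover have "eventually (\<lambda>x. x \<in> X) F"
    unfolding F_def eventually_filtermap using dX by simp
  ultimately have "(\<phi> \<longlongrightarrow> 0) F" using oc unfolding order_continuous_def by blast
  then have "(\<lambda>n. \<phi> (d n)) \<longlonglongrightarrow> 0" unfolding F_def filterlim_filtermap by simp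
  moreover have "\<phi> (d n) = \<phi> (ys n) - \<phi> y" for n unfolding d_def using lf_diff[OF lf ys y] .
  ultimately show ?thesis by (simp add: LIM_zero_cancel)
qed

lemma weak_topspace: "topspace (weak_top M X) = X"
  unfolding weak_top_def topology_generated_by_topspace by auto

lemma weak_basic: assumes "\<phi> \<in> order_dual_n M X" "open U"
  shows "openin (weak_top M X) {x \<in> X. \<phi> x \<in> U}"
  unfolding weak_top_def using assms by (intro topology_generated_by_Basis) blast

lemma seq_closure:
  assumes y: "y \<in> X" and ys: "\<And>n. ys n \<in> S" and SX: "S \<subseteq> X"
    and lim: "\<And>\<phi>. \<phi> \<in> order_dual_n M X \<Longrightarrow> (\<lambda>n. \<phi> (ys n)) \<longlonglongrightarrow> \<phi> y"
  shows "y \<in> weak_top M X closure_of S"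
proof -
  let ?B = "insert X {{x \<in> X. \<phi> x \<in> U} | \<phi> U. \<phi> \<in> order_dual_n M X \<and> open U}"
  have ev: "y \<in> T \<longrightarrow> eventually (\<lambda>n. ys n \<in> T) sequentially" if "generate_topology_on ?B T" for T
    using that
  proof (induction rule: generate_topology_on.induct)
    case Empty then show ?case by simp
  next
    case (Int a b) then show ?case by (auto intro: eventually_conj)
  next
    case (UN K)
    show ?case
    proof
      assume "y \<in> \<Union>K"
      then obtain k where "k \<in> K" "y \<in> k" by auto
      with UN have "eventually (\<lambda>n. ys n \<in> k) sequentially" by blast
      then show "eventually (\<lambda>n. ys n \<in> \<Union>K) sequentially"
        by (rule eventually_mono) (use \<open>k \<in> K\<close> in auto)
    qed
  next
    case (Basis s)
    then consider "s = X" | \<phi> U where "s = {x \<in> X. \<phi> x \<in> U}" "\<phi> \<in> order_dual_n M X" "open U"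
      by blast
    then show ?case
    proof cases
      case 1 then show ?thesis using ys SX by (auto intro!: always_eventually)
    next
      case 2
      show ?thesis
      proof
        assume "y \<in> s"
        then have "\<phi> y \<in> U" using 2 by auto
        then have "eventually (\<lambda>n. \<phi> (ys n) \<in> U) sequentially"
          using topological_tendstoD[OF lim[OF 2(2)] 2(3)] by blast
        then show "eventually (\<lambda>n. ys n \<in> s) sequentially"
          by (rule eventually_mono) (use 2 ys SX in auto)
      qed
    qed
  qed
  show ?thesis
    unfolding in_closure_of weak_topspace
  proof (intro conjI allI impI)
    show "y \<in> X" by (rule y)
    fix T assume "y \<in> T \<and> openin (weak_top M X) T"
    then have "generate_topology_on ?B T" "y \<in> T"
      unfolding weak_top_def openin_topology_generated_by_iff by auto
    then have "eventually (\<lambda>n. ys n \<in> T) sequentially" using ev by blast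
    then obtain n where "ys n \<in> T" using eventually_happens' by (metis sequentially_bot)
    then show "\<exists>y. y \<in> S \<and> y \<in> T" using ys by blast
  qed
qed

lemma affine_cont: assumes d: "d \<in> X"
  shows "continuous_map (weak_top M X) (weak_top M X) (\<lambda>x \<omega>. c * x \<omega> + d \<omega>)"
  unfolding weak_top_def
proof (rule continuous_on_generated_topo)
  let ?m = "\<lambda>x \<omega>. c * x \<omega> + d \<omega>"
  have mX: "?m x \<in> X" if "x \<in> X" for x using X_add[OF X_smul[OF that] d] .
  let ?B = "insert X {{x \<in> X. \<phi> x \<in> U} | \<phi> U. \<phi> \<in> order_dual_n M X \<and> open U}"
  have top: "topspace (topology_generated_by ?B) = X" using weak_topspace unfolding weak_top_def .
  show "?m ` topspace (topology_generated_by ?B) \<subseteq> \<Union> ?B" using mX top by auto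
  fix U assume "U \<in> ?B"
  then consider "U = X" | \<phi> V where "U = {x \<in> X. \<phi> x \<in> V}" "\<phi> \<in> order_dual_n M X" "open V"
    by blast
  then show "openin (topology_generated_by ?B) (?m -` U \<inter> topspace (topology_generated_by ?B))"
  proof cases
    case 1
    then have "?m -` U \<inter> topspace (topology_generated_by ?B) = X" using mX top by auto
    moreover have "openin (topology_generated_by ?B) (topspace (topology_generated_by ?B))"
      by (rule openin_topspace)
    ultimately show ?thesis unfolding top by simp
  next
    case 2
    have lf: "lin_functional M X \<phi>" using 2 unfolding order_dual_n_def by auto
    define V' where "V' = (\<lambda>t. c * t + \<phi> d) -` V"
    have eq: "?m -` U \<inter> topspace (topology_generated_by ?B) = {x \<in> X. \<phi> x \<in> V'}"
      using mX top 2(1) lf_add[OF lf X_smul d] lf_smul[OF lf] unfolding V'_def by auto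
    have "open V'" unfolding V'_def
      by (rule open_vimage[OF 2(3)]) (intro continuous_intros)
    from weak_basic[OF 2(2) this] show ?thesis unfolding eq weak_top_def .
  qed
qed

definition "Wk = weak_top M X closure_of O_span f"

lemma Wk_X: "Wk \<subseteq> X"
  unfolding Wk_def using closure_of_subset_topspace weak_topspace by metis

lemma O_Wk: "O_span f \<subseteq> Wk"
  unfolding Wk_def by (rule closure_of_subset) (use O_X weak_topspace in auto)

lemma Wk_affine:
  assumes d: "d \<in> X" and O: "\<And>x. x \<in> O_span f \<Longrightarrow> (\<lambda>\<omega>. c * x \<omega> + d \<omega>) \<in> Wk" and x: "x \<in> Wk"
  shows "(\<lambda>\<omega>. c * x \<omega> + d \<omega>) \<in> Wk"
proof -
  have "(\<lambda>x \<omega>. c * x \<omega> + d \<omega>) ` Wk \<subseteq> weak_top M X closure_of ((\<lambda>x \<omega>. c * x \<omega> + d \<omega>) ` O_span f)"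
    unfolding Wk_def by (rule continuous_map_image_closure_subset[OF affine_cont[OF d]])
  also have "\<dots> \<subseteq> weak_top M X closure_of Wk"
    by (rule closure_of_mono) (use O in auto)
  also have "\<dots> = Wk" unfolding Wk_def by simp
  finally show ?thesis using x by auto
qed

lemma Wk_smul: assumes "x \<in> Wk" shows "(\<lambda>\<omega>. c * x \<omega>) \<in> Wk"
proof -
  have "(\<lambda>\<omega>. c * x \<omega> + 0) \<in> Wk"
  proof (rule Wk_affine[OF X_const[of 0] _ assms])
    fix p assume "p \<in> O_span f"
    then have "(\<lambda>\<omega>. c * p \<omega>) \<in> O_span f" by (rule O_smul)
    then show "(\<lambda>\<omega>. c * p \<omega> + 0) \<in> Wk" using O_Wk by auto
  qed
  then show ?thesis by simp
qed

lemma Wk_add: assumes "x \<in> Wk" "y \<in> Wk" shows "(\<lambda>\<omega>. x \<omega> + y \<omega>) \<in> Wk"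
proof -
  have 1: "(\<lambda>\<omega>. 1 * z \<omega> + q \<omega>) \<in> Wk" if "q \<in> O_span f" "z \<in> Wk" for q z
  proof (rule Wk_affine[OF set_mp[OF O_X that(1)] _ that(2)])
    fix p assume "p \<in> O_span f"
    then have "(\<lambda>\<omega>. p \<omega> + q \<omega>) \<in> O_span f" using O_add that(1) by blast
    then show "(\<lambda>\<omega>. 1 * p \<omega> + q \<omega>) \<in> Wk" using O_Wk by auto
  qed
  have "(\<lambda>\<omega>. 1 * x \<omega> + y \<omega>) \<in> Wk"
  proof (rule Wk_affine[OF set_mp[OF Wk_X assms(2)] _ assms(1)])
    fix p assume "p \<in> O_span f"
    from 1[OF this assms(2)] show "(\<lambda>\<omega>. 1 * p \<omega> + y \<omega>) \<in> Wk" by (simp add: add.commute)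
  qed
  then show ?thesis by simp
qed

lemma Wk_lim:
  assumes gs: "\<And>n. gs n \<in> Wk" and g: "g \<in> borel_measurable M" and u: "u \<in> X"
    and conv: "AE \<omega> in M. (\<lambda>n. gs n \<omega>) \<longlonglongrightarrow> g \<omega>"
    and dom: "\<And>n. AE \<omega> in M. \<bar>gs n \<omega>\<bar> \<le> \<bar>u \<omega>\<bar>"
  shows "g \<in> Wk"
proof -
  have gsX: "gs n \<in> X" for n using gs Wk_X by auto
  have domall: "AE \<omega> in M. \<forall>n. \<bar>gs n \<omega>\<bar> \<le> \<bar>u \<omega>\<bar>" using dom by (simp add: AE_all_countable)
  have "AE \<omega> in M. \<bar>g \<omega>\<bar> \<le> \<bar>u \<omega>\<bar>"
    using conv domall
  proof eventually_elim
    case (elim \<omega>)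
    have "(\<lambda>n. \<bar>gs n \<omega>\<bar>) \<longlonglongrightarrow> \<bar>g \<omega>\<bar>" by (rule tendsto_rabs[OF elim(1)])
    then show ?case by (rule LIMSEQ_le_const2) (use elim(2) in auto)
  qed
  then have gX: "g \<in> X" by (rule X_dom[OF g u])
  have "g \<in> weak_top M X closure_of Wk"
    by (rule seq_closure[OF gX gs Wk_X]) (rule oc_seq[OF _ gsX gX u conv dom])
  then show ?thesis unfolding Wk_def by simp
qed

end



lemma ramp:
  fixes t a :: real and n :: nat
  defines "q \<equiv> 1 - (real n+1)*max (t-a) 0 + (real n+1)*max (t-(a+1/(real n+1))) 0"
  shows "0 \<le> q \<and> q \<le> 1" and "t \<le> a \<Longrightarrow> q = 1" and "a + 1/(real n+1) \<le> t \<Longrightarrow> q = 0"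
proof -
  define m where "m = real n + 1"
  have m: "0 < m" unfolding m_def by simp
  have d: "0 < 1/m" using m by simp
  have md: "m * (1/m) = 1" using m by simp
  have q: "q = 1 - m * max (t-a) 0 + m * max (t-(a+1/m)) 0" unfolding q_def m_def by simp
  have c1: "q = 1" if "t \<le> a"
  proof -
    have "t-(a+1/m) \<le> 0" using that d by linarith
    then have "max (t-a) 0 = 0" "max (t-(a+1/m)) 0 = 0" using that by auto
    then show ?thesis unfolding q by simp
  qed
  have c3: "q = 0" if "a + 1/m \<le> t"
  proof -
    have "0 \<le> t - a" "0 \<le> t-(a+1/m)" using that d by linarith+
    then have "max (t-a) 0 = t - a" "max (t-(a+1/m)) 0 = t-(a+1/m)" by auto
    then have "q = 1 - m * (t-a) + m * (t - a) - m * (1/m)" unfolding q by (simp add: algebra_simps)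
    then show ?thesis using md by simp
  qed
  have c2: "0 \<le> q \<and> q \<le> 1" if "a < t" "t < a + 1/m"
  proof -
    have "max (t-a) 0 = t - a" "max (t-(a+1/m)) 0 = 0" using that by auto
    then have qq: "q = 1 - m * (t-a)" unfolding q by simp
    have "m * (t-a) < m * (1/m)" using that m by (intro mult_strict_left_mono) auto
    moreover have "0 \<le> m * (t-a)" using that m by simp
    ultimately show ?thesis unfolding qq using md by linarith
  qed
  show "0 \<le> q \<and> q \<le> 1"
    using c1 c2 c3 by (cases "t \<le> a"; cases "a + 1/m \<le> t") auto
  show "t \<le> a \<Longrightarrow> q = 1" by (rule c1)
  show "a + 1/(real n+1) \<le> t \<Longrightarrow> q = 0" using c3 unfolding m_def by simp
qed

context stg begin

definition "Gen0 = {f -` B \<inter> space M | B. B \<in> sets borel} \<union> null_sets M"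

lemma Gen0_sub: "Gen0 \<subseteq> sets M"
  unfolding Gen0_def using f_meas by (auto intro: measurable_sets)

lemma Gen0_Pow: "Gen0 \<subseteq> Pow (space M)"
  using Gen0_sub sets.sets_into_space by blast

lemma G_space: "space (sigma_of M f) = space M"
  unfolding sigma_of_def Gen0_def[symmetric] using space_measure_of[OF Gen0_Pow] .

lemma G_sets: "sets (sigma_of M f) = sigma_sets (space M) Gen0"
  unfolding sigma_of_def Gen0_def[symmetric] using sets_measure_of[OF Gen0_Pow] .

lemma G_sub: "sets (sigma_of M f) \<subseteq> sets M"
  unfolding G_sets by (rule sets.sigma_sets_subset[OF Gen0_sub])

lemma G_null: "N \<in> null_sets M \<Longrightarrow> N \<in> sets (sigma_of M f)"
  unfolding G_sets Gen0_def by auto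

lemma subalg: "subalgebra M (sigma_of M f)"
  unfolding subalgebra_def using G_space G_sub by auto

lemma f_G: "f \<in> borel_measurable (sigma_of M f)"
proof (rule measurableI)
  fix B :: "real set" assume "B \<in> sets borel"
  then have "f -` B \<inter> space M \<in> Gen0" unfolding Gen0_def by auto
  then show "f -` B \<inter> space (sigma_of M f) \<in> sets (sigma_of M f)" unfolding G_space G_sets by auto
qed (auto simp: G_space)

lemma G_ae:
  fixes g h :: "'a \<Rightarrow> real"
  assumes h: "h \<in> borel_measurable (sigma_of M f)" and g: "g \<in> borel_measurable M"
    and ae: "AE \<omega> in M. g \<omega> = h \<omega>"
  shows "g \<in> borel_measurable (sigma_of M f)"
proof -
  obtain N where N: "\<And>x. x \<in> space M - N \<Longrightarrow> g x = h x" "N \<in> null_sets M"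
    using AE_E3[OF ae] by blast
  show ?thesis unfolding borel_measurable_iff_le G_space
  proof
    fix a :: real
    have eqA: "{w \<in> space M. g w \<le> a} = ({w \<in> space M. h w \<le> a} - N) \<union> ({w \<in> space M. g w \<le> a} \<inter> N)"
      using N(1) by auto
    have "{w \<in> space M. h w \<le> a} \<in> sets (sigma_of M f)"
      using h unfolding borel_measurable_iff_le G_space by blast
    moreover have "N \<in> sets (sigma_of M f)" using G_null[OF N(2)] .
    moreover have "{w \<in> space M. g w \<le> a} \<inter> N \<in> sets (sigma_of M f)"
      by (rule G_null, rule null_set_Int1[OF N(2)]) (use g in measurable)
    ultimately have "({w \<in> space M. h w \<le> a} - N) \<union> ({w \<in> space M. g w \<le> a} \<inter> N) \<in> sets (sigma_of M f)"
      by (intro sets.Un sets.Diff)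
    then show "{w \<in> space M. g w \<le> a} \<in> sets (sigma_of M f)"
      by (subst eqA)
  qed
qed

lemma O_G: "x \<in> O_span f \<Longrightarrow> x \<in> borel_measurable (sigma_of M f)"
  unfolding O_span_def using f_G by auto

lemma halfline_conv:
  fixes a t :: real
  shows "(\<lambda>n. 1 - (real n+1)*max (t-a) 0 + (real n+1)*max (t-(a+1/(real n+1))) 0) \<longlonglongrightarrow> (if t \<le> a then 1 else 0)"
proof (cases "t \<le> a")
  case True then show ?thesis using ramp(2)[OF True] by simp
next
  case False
  then have "0 < t - a" by simp
  then obtain N :: nat where N: "1 / (t - a) < real N" using reals_Archimedean2 by blast
  have "eventually (\<lambda>n. 1 - (real n+1)*max (t-a) 0 + (real n+1)*max (t-(a+1/(real n+1))) 0 = 0) sequentially"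
    unfolding eventually_sequentially
  proof (intro exI[of _ N] allI impI)
    fix n assume "N \<le> n"
    then have "1 / (t - a) < real n + 1" using N by linarith
    then have "1 < (real n + 1) * (t - a)" using \<open>0 < t - a\<close> by (simp add: pos_divide_less_eq)
    then have "1 / (real n + 1) < t - a"
      by (subst pos_divide_less_eq) (auto simp: mult.commute)
    then show "1 - (real n+1)*max (t-a) 0 + (real n+1)*max (t-(a+1/(real n+1))) 0 = 0"
      by (intro ramp(3)) simp
  qed
  then show ?thesis using False by (simp add: tendsto_eventually)
qed

lemma abstract:
  assumes WX: "W \<subseteq> X" and OW: "O_span f \<subseteq> W"
    and Wadd: "\<And>x y. x \<in> W \<Longrightarrow> y \<in> W \<Longrightarrow> (\<lambda>\<omega>. x \<omega> + y \<omega>) \<in> W"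
    and Wsmul: "\<And>x c. x \<in> W \<Longrightarrow> (\<lambda>\<omega>. c * x \<omega>) \<in> W"
    and Wlim: "\<And>gs g u. (\<And>n. gs n \<in> W) \<Longrightarrow> g \<in> borel_measurable M \<Longrightarrow> u \<in> X \<Longrightarrow>
        (AE \<omega> in M. (\<lambda>n. gs n \<omega>) \<longlonglongrightarrow> g \<omega>) \<Longrightarrow> (\<And>n. AE \<omega> in M. \<bar>gs n \<omega>\<bar> \<le> \<bar>u \<omega>\<bar>) \<Longrightarrow> g \<in> W"
    and gX: "g \<in> X" and gG: "g \<in> borel_measurable (sigma_of M f)"
  shows "g \<in> W"
proof -
  have W_ae: "y \<in> W" if x: "x \<in> W" and y: "y \<in> borel_measurable M" and ae: "AE \<omega> in M. x \<omega> = y \<omega>" for x y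
  proof (rule Wlim[of "\<lambda>_. x" y x])
    show "x \<in> X" using x WX by auto
    show "AE \<omega> in M. (\<lambda>n. x \<omega>) \<longlonglongrightarrow> y \<omega>" using ae by eventually_elim simp
  qed (use x y in auto)
  have W0: "(\<lambda>_. 0) \<in> W" using O_const OW by blast
  have W1: "(\<lambda>_. 1) \<in> W" using O_const OW by blast
  have W_sum: "(\<lambda>\<omega>. \<Sum>i\<in>I. c i * h i \<omega>) \<in> W" if "finite I" "\<And>i. i \<in> I \<Longrightarrow> h i \<in> W" for I c h
    using that
  proof (induction I rule: finite_induct)
    case empty then show ?case using W0 by simp
  next
    case (insert a I)
    then show ?case using Wadd[OF Wsmul[of "h a" "c a"], of "\<lambda>\<omega>. \<Sum>i\<in>I. c i * h i \<omega>"] by simp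
  qed
  define Gen where "Gen = {f -` {..a} \<inter> space M | a. True} \<union> null_sets M"
  have Gen_sub: "Gen \<subseteq> sets M" unfolding Gen_def using f_meas by (auto intro: measurable_sets)
  have Gen_Pow: "Gen \<subseteq> Pow (space M)" using Gen_sub sets.sets_into_space by blast
  have Gen_Int: "Int_stable Gen"
    unfolding Int_stable_def
  proof (intro ballI)
    fix A B assume A: "A \<in> Gen" and B: "B \<in> Gen"
    show "A \<inter> B \<in> Gen"
    proof (cases "A \<in> null_sets M \<or> B \<in> null_sets M")
      case True
      then have "A \<inter> B \<in> null_sets M"
        using A B Gen_sub null_set_Int1 null_set_Int2 by blast
      then show ?thesis unfolding Gen_def by blast
    next
      case False
      then obtain a b where "A = f -` {..a} \<inter> space M" "B = f -` {..b} \<inter> space M"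
        using A B unfolding Gen_def by blast
      then have "A \<inter> B = f -` {..min a b} \<inter> space M" by auto
      then show ?thesis unfolding Gen_def by blast
    qed
  qed
  have sigGen_sub: "sigma_sets (space M) Gen \<subseteq> sets M" by (rule sets.sigma_sets_subset[OF Gen_sub])
  have half: "indicator (f -` {..a} \<inter> space M) \<in> W" for a
  proof -
    define p where "p n = (\<lambda>\<omega>. 1 + (\<Sum>k\<in>{a, a + 1/(real n+1)}. (if k = a then -(real n+1) else real n+1) * max (f \<omega> - k) 0))" for n
    have ne: "a \<noteq> a + 1/(real n+1)" for n by simp
    have p_eq: "p n \<omega> = 1 - (real n+1)*max (f \<omega>-a) 0 + (real n+1)*max (f \<omega>-(a+1/(real n+1))) 0" for n \<omega>
      unfolding p_def using ne[of n] by (simp add: algebra_simps)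
    have pO: "p n \<in> O_span f" for n
      unfolding p_def O_span_def
      by (intro CollectI exI[of _ 1] exI[of _ "\<lambda>k. if k = a then -(real n+1) else real n+1"]
          exI[of _ "{a, a + 1/(real n+1)}"]) simp
    show ?thesis
    proof (rule Wlim[of p _ "\<lambda>_. 1"])
      show "p n \<in> W" for n using pO OW by blast
      show "indicator (f -` {..a} \<inter> space M) \<in> borel_measurable M"
        using Gen_sub unfolding Gen_def by (intro borel_measurable_indicator) auto
      show "(\<lambda>_. 1) \<in> X" by (rule X_const)
      show "AE \<omega> in M. (\<lambda>n. p n \<omega>) \<longlonglongrightarrow> indicator (f -` {..a} \<inter> space M) \<omega>"
      proof (rule AE_I2)
        fix \<omega> assume "\<omega> \<in> space M"
        then have "indicator (f -` {..a} \<inter> space M) \<omega> = (if f \<omega> \<le> a then 1 else (0::real))"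
          by (simp add: indicator_def)
        then show "(\<lambda>n. p n \<omega>) \<longlonglongrightarrow> indicator (f -` {..a} \<inter> space M) \<omega>"
          by (simp only: p_eq) (rule halfline_conv)
      qed
      show "AE \<omega> in M. \<bar>p n \<omega>\<bar> \<le> \<bar>1\<bar>" for n
        by (rule AE_I2) (use ramp(1)[of n "f _" a] in \<open>simp add: p_eq\<close>)
    qed
  qed
  have ind: "indicator A \<in> W" if "A \<in> sigma_sets (space M) Gen" for A
    using Gen_Int Gen_Pow that
  proof (induction rule: sigma_sets_induct_disjoint)
    case (basic A)
    then consider a where "A = f -` {..a} \<inter> space M" | "A \<in> null_sets M" unfolding Gen_def by blast
    then show ?case
    proof cases
      case 1 then show ?thesis using half by simp
    next
      case 2
      show ?thesis
      proof (rule W_ae[OF W0])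
        show "indicator A \<in> borel_measurable M" using 2 by auto
        show "AE \<omega> in M. 0 = indicator A \<omega>" using AE_not_in[OF 2] by eventually_elim simp
      qed
    qed
  next
    case empty then show ?case using W0 by simp
  next
    case (compl A)
    have "(\<lambda>\<omega>. 1 + (-1) * indicator A \<omega>) \<in> W" using Wadd[OF W1 Wsmul[OF compl(2), of "-1"]] by simp
    then show ?case
    proof (rule W_ae)
      show "indicator (space M - A) \<in> borel_measurable M" using compl(1) sigGen_sub by auto
      show "AE \<omega> in M. 1 + - 1 * indicator A \<omega> = (indicator (space M - A) \<omega> :: real)"
        by (rule AE_I2) (simp add: indicator_def)
    qed
  next
    case (union A)
    define s where "s n = (\<lambda>\<omega>. \<Sum>i\<in>{..<n}. 1 * (indicator (A i) \<omega> :: real))" for n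
    have sW: "s n \<in> W" for n unfolding s_def by (rule W_sum) (use union in auto)
    have s_eq: "s n \<omega> = indicator (\<Union>i<n. A i) \<omega>" for n \<omega>
    proof -
      have "disjoint_family_on A {..<n}" using union(1) disjoint_family_on_mono by blast
      from indicator_UN_disjoint[OF finite_lessThan this, of \<omega>]
      have "(indicator (\<Union>i<n. A i) \<omega> :: real) = (\<Sum>i<n. indicator (A i) \<omega>)" by simp
      then show ?thesis unfolding s_def by simp
    qed
    show ?case
    proof (rule Wlim[OF sW _ X_const[of 1]])
      have "range A \<subseteq> sets M" using union(2) sigGen_sub by auto
      then have "(\<Union>i. A i) \<in> sets M" by auto
      then show "indicator (\<Union>i. A i) \<in> borel_measurable M" by (rule borel_measurable_indicator)
      show "AE \<omega> in M. (\<lambda>n. s n \<omega>) \<longlonglongrightarrow> indicator (\<Union>i. A i) \<omega>"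
        by (rule AE_I2) (simp add: s_eq LIMSEQ_indicator_UN)
      show "AE \<omega> in M. \<bar>s n \<omega>\<bar> \<le> \<bar>1\<bar>" for n
        by (rule AE_I2) (simp add: s_eq indicator_def)
    qed
  qed
  have G_sig: "sets (sigma_of M f) \<subseteq> sigma_sets (space M) Gen"
    unfolding G_sets
  proof (rule sigma_sets_mono)
    have sp: "space (sigma (space M) Gen) = space M" by (rule space_measure_of[OF Gen_Pow])
    have st: "sets (sigma (space M) Gen) = sigma_sets (space M) Gen" by (rule sets_measure_of[OF Gen_Pow])
    have fm: "f \<in> borel_measurable (sigma (space M) Gen)"
      unfolding borel_measurable_iff_le sp st
    proof
      fix a :: real
      have "{w \<in> space M. f w \<le> a} = f -` {..a} \<inter> space M" by auto
      then show "{w \<in> space M. f w \<le> a} \<in> sigma_sets (space M) Gen" unfolding Gen_def by auto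
    qed
    show "Gen0 \<subseteq> sigma_sets (space M) Gen"
    proof
      fix A assume "A \<in> Gen0"
      then consider B where "A = f -` B \<inter> space M" "B \<in> sets borel" | "A \<in> null_sets M"
        unfolding Gen0_def by blast
      then show "A \<in> sigma_sets (space M) Gen"
      proof cases
        case 1
        then show ?thesis using measurable_sets[OF fm 1(2)] unfolding sp st by simp
      next
        case 2 then show ?thesis unfolding Gen_def by auto
      qed
    qed
  qed
  have indG: "indicator A \<in> W" if "A \<in> sets (sigma_of M f)" for A
    using ind G_sig that by blast
  obtain F where F: "\<And>i. simple_function (sigma_of M f) (F i)"
    "\<And>x. x \<in> space (sigma_of M f) \<Longrightarrow> (\<lambda>i. F i x) \<longlonglongrightarrow> g x"
    "\<And>i x. x \<in> space (sigma_of M f) \<Longrightarrow> dist (F i x) 0 \<le> 2 * dist (g x) 0"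
    using borel_measurable_implies_sequence_metric[OF gG, of 0] by blast
  have FW: "F i \<in> W" for i
  proof -
    let ?S = "F i ` space M"
    have fin: "finite ?S" and sets: "\<And>y. y \<in> ?S \<Longrightarrow> F i -` {y} \<inter> space M \<in> sets (sigma_of M f)"
      using F(1)[of i] unfolding simple_function_def G_space by auto
    have "(\<lambda>\<omega>. \<Sum>y\<in>?S. y * indicator (F i -` {y} \<inter> space M) \<omega>) \<in> W"
      by (rule W_sum[OF fin]) (use sets indG in auto)
    then show ?thesis
    proof (rule W_ae)
      show "F i \<in> borel_measurable M"
        by (rule measurable_from_subalg[OF subalg borel_measurable_simple_function[OF F(1)]])
      show "AE \<omega> in M. (\<Sum>y\<in>?S. y * indicator (F i -` {y} \<inter> space M) \<omega>) = F i \<omega>"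
      proof (rule AE_I2)
        fix \<omega> assume "\<omega> \<in> space M"
        then have "F i \<omega> = (\<Sum>y\<in>?S. indicator (F i -` {y} \<inter> space M) \<omega> *\<^sub>R y)"
          using simple_function_indicator_representation_banach[OF F(1), of \<omega>]
          unfolding G_space by blast
        also have "\<dots> = (\<Sum>y\<in>?S. y * indicator (F i -` {y} \<inter> space M) \<omega>)"
          by (rule sum.cong) (simp_all add: real_scaleR_def)
        finally show "(\<Sum>y\<in>?S. y * indicator (F i -` {y} \<inter> space M) \<omega>) = F i \<omega>" by (rule sym)
      qed
    qed
  qed
  show ?thesis
  proof (rule Wlim[OF FW _ X_smul[OF X_abs[OF gX], of 2]])
    show "g \<in> borel_measurable M" using X_meas[OF gX] .
    show "AE \<omega> in M. (\<lambda>n. F n \<omega>) \<longlonglongrightarrow> g \<omega>" by (rule AE_I2) (use F(2) G_space in auto)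
    show "AE \<omega> in M. \<bar>F n \<omega>\<bar> \<le> \<bar>2 * \<bar>g \<omega>\<bar>\<bar>" for n
      by (rule AE_I2) (use F(3)[of _ n] G_space in auto)
  qed
qed

end



context stg begin

lemma Q_Wk: "g \<in> X \<Longrightarrow> g \<in> borel_measurable (sigma_of M f) \<Longrightarrow> g \<in> Wk"
  by (rule abstract[OF Wk_X O_Wk Wk_add Wk_smul Wk_lim])

lemma AE_dom_lim:
  fixes gs :: "nat \<Rightarrow> 'a \<Rightarrow> real" and g u :: "'a \<Rightarrow> real"
  assumes conv: "AE \<omega> in M. (\<lambda>n. gs n \<omega>) \<longlonglongrightarrow> g \<omega>"
    and dom: "\<And>n. AE \<omega> in M. \<bar>gs n \<omega>\<bar> \<le> \<bar>u \<omega>\<bar>"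
  shows "AE \<omega> in M. \<bar>g \<omega>\<bar> \<le> \<bar>u \<omega>\<bar>"
proof -
  have domall: "AE \<omega> in M. \<forall>n. \<bar>gs n \<omega>\<bar> \<le> \<bar>u \<omega>\<bar>" using dom by (simp add: AE_all_countable)
  show ?thesis using conv domall
  proof eventually_elim
    case (elim \<omega>)
    have "(\<lambda>n. \<bar>gs n \<omega>\<bar>) \<longlonglongrightarrow> \<bar>g \<omega>\<bar>" by (rule tendsto_rabs[OF elim(1)])
    then show ?case by (rule LIMSEQ_le_const2) (use elim(2) in auto)
  qed
qed

lemma conv_in_measure:
  fixes y :: "nat \<Rightarrow> 'a \<Rightarrow> real"
  assumes ym: "\<And>n. y n \<in> borel_measurable M" and yl: "yl \<in> borel_measurable M"
    and conv: "AE \<omega> in M. (\<lambda>n. y n \<omega>) \<longlonglongrightarrow> yl \<omega>" and e: "0 < e"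
  shows "(\<lambda>n. measure M {\<omega> \<in> space M. e < \<bar>y n \<omega> - yl \<omega>\<bar>}) \<longlonglongrightarrow> 0"
proof -
  interpret prob_space M by (rule prob)
  define A where "A n = {\<omega> \<in> space M. e < \<bar>y n \<omega> - yl \<omega>\<bar>}" for n
  have A: "A n \<in> sets M" for n unfolding A_def using ym[of n] yl by measurable
  have "(\<lambda>n. integral\<^sup>L M (indicator (A n) :: 'a \<Rightarrow> real)) \<longlonglongrightarrow> integral\<^sup>L M (\<lambda>_. 0 :: real)"
  proof (rule integral_dominated_convergence[where w = "\<lambda>_. 1"])
    show "(\<lambda>_. 0::real) \<in> borel_measurable M" by simp
    show "indicator (A n) \<in> borel_measurable M" for n using A by simp
    show "integrable M (\<lambda>_. 1::real)" by simp
    show "AE x in M. norm (indicator (A n) x :: real) \<le> 1" for n by (rule AE_I2) (simp add: indicator_def)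
    show "AE x in M. (\<lambda>n. indicator (A n) x :: real) \<longlonglongrightarrow> 0" using conv
    proof eventually_elim
      case (elim \<omega>)
      then obtain N where N: "\<And>n. N \<le> n \<Longrightarrow> norm (y n \<omega> - yl \<omega>) < e"
        using e unfolding LIMSEQ_iff by blast
      have "eventually (\<lambda>n. (indicator (A n) \<omega> :: real) = 0) sequentially"
        unfolding eventually_sequentially A_def
      proof (intro exI[of _ N] allI impI)
        fix n assume "N \<le> n"
        then show "(indicator {\<omega> \<in> space M. e < \<bar>y n \<omega> - yl \<omega>\<bar>} \<omega> :: real) = 0"
          using N[of n] by (auto simp: indicator_def)
      qed
      then show ?case by (rule tendsto_eventually)
    qed
  qed
  moreover have "integral\<^sup>L M (indicator (A n) :: 'a \<Rightarrow> real) = measure M (A n)" for n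
    using A by (simp add: Int_absorb2 sets.sets_into_space)
  ultimately show ?thesis unfolding A_def by simp
qed

definition "Cp = {g \<in> X. \<forall>e>0. \<exists>q\<in>O_span f. measure M {\<omega> \<in> space M. e < \<bar>g \<omega> - q \<omega>\<bar>} < e}"

lemma split_meas:
  fixes a b c :: "'a \<Rightarrow> real"
  assumes "a \<in> borel_measurable M" "b \<in> borel_measurable M" "c \<in> borel_measurable M"
  shows "measure M {\<omega> \<in> space M. e < \<bar>a \<omega> - c \<omega>\<bar>}
     \<le> measure M {\<omega> \<in> space M. e/2 < \<bar>a \<omega> - b \<omega>\<bar>} + measure M {\<omega> \<in> space M. e/2 < \<bar>b \<omega> - c \<omega>\<bar>}"
proof -
  interpret prob_space M by (rule prob)
  have s1: "{\<omega> \<in> space M. e/2 < \<bar>a \<omega> - b \<omega>\<bar>} \<in> sets M" "{\<omega> \<in> space M. e/2 < \<bar>b \<omega> - c \<omega>\<bar>} \<in> sets M"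
    using assms by measurable
  have "measure M {\<omega> \<in> space M. e < \<bar>a \<omega> - c \<omega>\<bar>}
     \<le> measure M ({\<omega> \<in> space M. e/2 < \<bar>a \<omega> - b \<omega>\<bar>} \<union> {\<omega> \<in> space M. e/2 < \<bar>b \<omega> - c \<omega>\<bar>})"
  proof (rule finite_measure_mono)
    show "{\<omega> \<in> space M. e < \<bar>a \<omega> - c \<omega>\<bar>} \<subseteq> {\<omega> \<in> space M. e/2 < \<bar>a \<omega> - b \<omega>\<bar>} \<union> {\<omega> \<in> space M. e/2 < \<bar>b \<omega> - c \<omega>\<bar>}"
    proof safe
      fix \<omega> assume "\<omega> \<in> space M" "e < \<bar>a \<omega> - c \<omega>\<bar>" "\<not> e/2 < \<bar>b \<omega> - c \<omega>\<bar>"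
      moreover have "\<bar>a \<omega> - c \<omega>\<bar> \<le> \<bar>a \<omega> - b \<omega>\<bar> + \<bar>b \<omega> - c \<omega>\<bar>" by linarith
      ultimately show "e/2 < \<bar>a \<omega> - b \<omega>\<bar>" by linarith
    qed
  qed (use s1 in auto)
  also have "\<dots> \<le> measure M {\<omega> \<in> space M. e/2 < \<bar>a \<omega> - b \<omega>\<bar>} + measure M {\<omega> \<in> space M. e/2 < \<bar>b \<omega> - c \<omega>\<bar>}"
    by (rule measure_Un_le[OF s1])
  finally show ?thesis .
qed

lemma Cp_approx: "x \<in> Cp \<Longrightarrow> 0 < e \<Longrightarrow> \<exists>q\<in>O_span f. measure M {\<omega> \<in> space M. e < \<bar>x \<omega> - q \<omega>\<bar>} < e"
  unfolding Cp_def by blast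

lemma Cp_X: "Cp \<subseteq> X" unfolding Cp_def by auto

lemma O_Cp: "O_span f \<subseteq> Cp"
  unfolding Cp_def using O_X by (auto intro!: bexI)

lemma O_meas: "q \<in> O_span f \<Longrightarrow> q \<in> borel_measurable M"
  using O_X X_meas by auto

lemma Cp_add: assumes x: "x \<in> Cp" and y: "y \<in> Cp" shows "(\<lambda>\<omega>. x \<omega> + y \<omega>) \<in> Cp"
  unfolding Cp_def
proof (intro CollectI conjI allI impI)
  show "(\<lambda>\<omega>. x \<omega> + y \<omega>) \<in> X" using x y X_add Cp_X by auto
  fix e :: real assume e: "0 < e"
  obtain p where p: "p \<in> O_span f" "measure M {\<omega> \<in> space M. e/2 < \<bar>x \<omega> - p \<omega>\<bar>} < e/2"
    using Cp_approx[OF x, of "e/2"] e by auto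
  obtain q where q: "q \<in> O_span f" "measure M {\<omega> \<in> space M. e/2 < \<bar>y \<omega> - q \<omega>\<bar>} < e/2"
    using Cp_approx[OF y, of "e/2"] e by auto
  have xm: "x \<in> borel_measurable M" "y \<in> borel_measurable M" using x y Cp_X X_meas by auto
  have pm: "p \<in> borel_measurable M" "q \<in> borel_measurable M" using p q O_meas by auto
  have "measure M {\<omega> \<in> space M. e < \<bar>(x \<omega> + y \<omega>) - (p \<omega> + q \<omega>)\<bar>}
      \<le> measure M {\<omega> \<in> space M. e/2 < \<bar>(x \<omega> + y \<omega>) - (p \<omega> + y \<omega>)\<bar>} + measure M {\<omega> \<in> space M. e/2 < \<bar>(p \<omega> + y \<omega>) - (p \<omega> + q \<omega>)\<bar>}"
    by (rule split_meas[where b = "\<lambda>\<omega>. p \<omega> + y \<omega>", of "\<lambda>\<omega>. x \<omega> + y \<omega>" "\<lambda>\<omega>. p \<omega> + q \<omega>"])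
       (use xm pm in measurable)
  also have "\<dots> < e" using p(2) q(2) by simp
  finally show "\<exists>q\<in>O_span f. measure M {\<omega> \<in> space M. e < \<bar>x \<omega> + y \<omega> - q \<omega>\<bar>} < e"
    using O_add[OF p(1) q(1)] by auto
qed

lemma Cp_smul: assumes x: "x \<in> Cp" shows "(\<lambda>\<omega>. c * x \<omega>) \<in> Cp"
proof (cases "c = 0")
  case True
  then show ?thesis using O_Cp O_const[of 0 f] by auto
next
  case False
  show ?thesis unfolding Cp_def
  proof (intro CollectI conjI allI impI)
    show "(\<lambda>\<omega>. c * x \<omega>) \<in> X" using x X_smul Cp_X by auto
    fix e :: real assume e: "0 < e"
    define e' where "e' = min e (e / \<bar>c\<bar>)"
    have e': "0 < e'" "e' \<le> e" "e' \<le> e / \<bar>c\<bar>" using e False unfolding e'_def by auto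
    obtain p where p: "p \<in> O_span f" "measure M {\<omega> \<in> space M. e' < \<bar>x \<omega> - p \<omega>\<bar>} < e'"
      using x e' unfolding Cp_def by blast
    have xm: "x \<in> borel_measurable M" using x Cp_X X_meas by auto
    have pm: "p \<in> borel_measurable M" using p O_meas by auto
    interpret prob_space M by (rule prob)
    have "measure M {\<omega> \<in> space M. e < \<bar>c * x \<omega> - c * p \<omega>\<bar>} \<le> measure M {\<omega> \<in> space M. e' < \<bar>x \<omega> - p \<omega>\<bar>}"
    proof (rule finite_measure_mono)
      show "{\<omega> \<in> space M. e' < \<bar>x \<omega> - p \<omega>\<bar>} \<in> sets M" using xm pm by measurable
      show "{\<omega> \<in> space M. e < \<bar>c * x \<omega> - c * p \<omega>\<bar>} \<subseteq> {\<omega> \<in> space M. e' < \<bar>x \<omega> - p \<omega>\<bar>}"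
      proof safe
        fix \<omega> assume "e < \<bar>c * x \<omega> - c * p \<omega>\<bar>"
        then have "e < \<bar>c\<bar> * \<bar>x \<omega> - p \<omega>\<bar>" by (simp add: abs_mult[symmetric] right_diff_distrib)
        then have "e / \<bar>c\<bar> < \<bar>x \<omega> - p \<omega>\<bar>" using False by (simp add: pos_divide_less_eq mult.commute)
        then show "e' < \<bar>x \<omega> - p \<omega>\<bar>" using e' by linarith
      qed
    qed
    also have "\<dots> < e" using p(2) e' by linarith
    finally show "\<exists>q\<in>O_span f. measure M {\<omega> \<in> space M. e < \<bar>c * x \<omega> - q \<omega>\<bar>} < e"
      using O_smul[OF p(1), of c] by auto
  qed
qed

lemma Cp_lim:
  assumes gs: "\<And>n. gs n \<in> Cp" and g: "g \<in> borel_measurable M" and u: "u \<in> X"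
    and conv: "AE \<omega> in M. (\<lambda>n. gs n \<omega>) \<longlonglongrightarrow> g \<omega>"
    and dom: "\<And>n. AE \<omega> in M. \<bar>gs n \<omega>\<bar> \<le> \<bar>u \<omega>\<bar>"
  shows "g \<in> Cp"
  unfolding Cp_def
proof (intro CollectI conjI allI impI)
  show gX: "g \<in> X" by (rule X_dom[OF g u AE_dom_lim[OF conv dom]])
  fix e :: real assume e: "0 < e"
  have gsm: "gs n \<in> borel_measurable M" for n using gs Cp_X X_meas by auto
  have "(\<lambda>n. measure M {\<omega> \<in> space M. e/2 < \<bar>gs n \<omega> - g \<omega>\<bar>}) \<longlonglongrightarrow> 0"
    by (rule conv_in_measure[OF gsm g conv]) (use e in simp)
  then obtain N where N: "\<And>n. N \<le> n \<Longrightarrow> norm (measure M {\<omega> \<in> space M. e/2 < \<bar>gs n \<omega> - g \<omega>\<bar>} - 0) < e/2"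
    using e unfolding LIMSEQ_iff by (meson half_gt_zero)
  define n where "n = N"
  have n: "measure M {\<omega> \<in> space M. e/2 < \<bar>gs n \<omega> - g \<omega>\<bar>} < e/2"
    using N[of N] unfolding n_def by simp
  obtain p where p: "p \<in> O_span f" "measure M {\<omega> \<in> space M. e/2 < \<bar>gs n \<omega> - p \<omega>\<bar>} < e/2"
  proof -
    have "\<forall>e>0. \<exists>q\<in>O_span f. measure M {\<omega> \<in> space M. e < \<bar>gs n \<omega> - q \<omega>\<bar>} < e"
      using gs[of n] unfolding Cp_def by blast
    moreover have "0 < e/2" using e by simp
    ultimately show ?thesis using that by blast
  qed
  have pm: "p \<in> borel_measurable M" using p O_meas by auto
  have "measure M {\<omega> \<in> space M. e < \<bar>g \<omega> - p \<omega>\<bar>}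
     \<le> measure M {\<omega> \<in> space M. e/2 < \<bar>g \<omega> - gs n \<omega>\<bar>} + measure M {\<omega> \<in> space M. e/2 < \<bar>gs n \<omega> - p \<omega>\<bar>}"
    by (rule split_meas[OF g gsm pm])
  also have "\<dots> < e" using n p(2) by (simp add: abs_minus_commute)
  finally show "\<exists>q\<in>O_span f. measure M {\<omega> \<in> space M. e < \<bar>g \<omega> - q \<omega>\<bar>} < e" using p(1) by blast
qed

lemma Q_Cp: "g \<in> X \<Longrightarrow> g \<in> borel_measurable (sigma_of M f) \<Longrightarrow> g \<in> Cp"
  by (rule abstract[OF Cp_X O_Cp Cp_add Cp_smul Cp_lim])

lemma Cp_seq: assumes g: "g \<in> Cp"
  shows "\<exists>gs. (\<forall>n. gs n \<in> O_span f) \<and> (AE \<omega> in M. (\<lambda>n. gs n \<omega>) \<longlonglongrightarrow> g \<omega>)"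
proof -
  interpret prob_space M by (rule prob)
  have "\<forall>n. \<exists>q\<in>O_span f. measure M {\<omega> \<in> space M. (1/2)^n < \<bar>g \<omega> - q \<omega>\<bar>} < (1/2)^n"
    using g unfolding Cp_def by auto
  then obtain gs where gs: "\<And>n. gs n \<in> O_span f"
    "\<And>n. measure M {\<omega> \<in> space M. (1/2)^n < \<bar>g \<omega> - gs n \<omega>\<bar>} < (1/2)^n"
    by metis
  define A where "A n = {\<omega> \<in> space M. (1/2)^n < \<bar>g \<omega> - gs n \<omega>\<bar>}" for n
  have gm: "g \<in> borel_measurable M" using g Cp_X X_meas by auto
  have A: "A n \<in> sets M" for n unfolding A_def using gm O_meas[OF gs(1)[of n]] by measurable
  have "AE \<omega> in M. eventually (\<lambda>n. \<omega> \<in> space M - A n) sequentially"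
  proof (rule borel_cantelli_AE1[OF A])
    show "emeasure M (A n) < \<infinity>" for n by (simp add: less_top[symmetric])
    show "summable (\<lambda>n. measure M (A n))"
    proof (rule summable_comparison_test[OF _ summable_geometric[of "1/2::real"]])
      show "\<exists>N. \<forall>n\<ge>N. norm (measure M (A n)) \<le> (1/2)^n"
        using gs(2) unfolding A_def by (auto intro!: less_imp_le)
    qed simp
  qed
  then have "AE \<omega> in M. (\<lambda>n. gs n \<omega>) \<longlonglongrightarrow> g \<omega>"
  proof eventually_elim
    case (elim \<omega>)
    have "eventually (\<lambda>n. norm (gs n \<omega> - g \<omega>) \<le> (1/2)^n) sequentially"
      using elim by (rule eventually_mono) (auto simp: A_def abs_minus_commute)
    then have "(\<lambda>n. gs n \<omega> - g \<omega>) \<longlonglongrightarrow> 0"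
      by (rule Lim_null_comparison) (simp add: LIMSEQ_realpow_zero)
    then show ?case by (simp add: LIM_zero_cancel)
  qed
  then show ?thesis using gs(1) by blast
qed

lemma seq_Q:
  assumes gX: "g \<in> X" and gs: "\<And>n. gs n \<in> O_span f"
    and conv: "AE \<omega> in M. (\<lambda>n. gs n \<omega>) \<longlonglongrightarrow> g \<omega>"
  shows "g \<in> borel_measurable (sigma_of M f)"
proof -
  obtain N where N: "\<And>x. x \<in> space M - N \<Longrightarrow> (\<lambda>n. gs n x) \<longlonglongrightarrow> g x" "N \<in> null_sets M"
    using AE_E3[OF conv] by blast
  have NG: "N \<in> sets (sigma_of M f)" by (rule G_null[OF N(2)])
  define h where "h = (\<lambda>\<omega>. if \<omega> \<in> N then 0 else g \<omega>)"
  have "h \<in> borel_measurable (sigma_of M f)"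
  proof (rule borel_measurable_LIMSEQ_real[where u = "\<lambda>n \<omega>. if \<omega> \<in> N then 0 else gs n \<omega>"])
    fix x assume "x \<in> space (sigma_of M f)"
    then show "(\<lambda>n. if x \<in> N then 0 else gs n x) \<longlonglongrightarrow> h x"
      using N(1)[of x] G_space unfolding h_def by auto
  next
    fix n
    have "gs n \<in> borel_measurable (sigma_of M f)" by (rule O_G[OF gs])
    then show "(\<lambda>\<omega>. if \<omega> \<in> N then 0 else gs n \<omega>) \<in> borel_measurable (sigma_of M f)"
      using NG by measurable
  qed
  then show ?thesis
  proof (rule G_ae)
    show "g \<in> borel_measurable M" by (rule X_meas[OF gX])
    show "AE \<omega> in M. g \<omega> = h \<omega>" using AE_not_in[OF N(2)] by eventually_elim (simp add: h_def)
  qed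
qed

end



lemma min_lim: "(\<lambda>n. min (real n) (t::real)) \<longlonglongrightarrow> t"
proof -
  obtain N where "t \<le> real N" using real_arch_simple by blast
  then have "eventually (\<lambda>n. min (real n) t = t) sequentially"
    unfolding eventually_sequentially by (intro exI[of _ N]) auto
  then show ?thesis by (rule tendsto_eventually)
qed

lemma clip_lim: "(\<lambda>n. max (- real n) (min (real n) (t::real))) \<longlonglongrightarrow> t"
proof -
  obtain N where "\<bar>t\<bar> \<le> real N" using real_arch_simple by blast
  then have "eventually (\<lambda>n. max (- real n) (min (real n) t) = t) sequentially"
    unfolding eventually_sequentially by (intro exI[of _ N]) auto
  then show ?thesis by (rule tendsto_eventually)
qed

locale stg2 = stg +
  fixes \<phi> :: "('a \<Rightarrow> real) \<Rightarrow> real"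
  assumes phiD: "\<phi> \<in> order_dual_n M X" and phiP: "strictly_positive M X \<phi>"
begin

lemma lf: "lin_functional M X \<phi>" using phiD unfolding order_dual_n_def by auto

lemma phi_pos: assumes "x \<in> X" "AE \<omega> in M. 0 \<le> x \<omega>" shows "0 \<le> \<phi> x"
proof (cases "AE \<omega> in M. x \<omega> = 0")
  case True
  then have "\<phi> x = \<phi> (\<lambda>_. 0)" using lf_ae[OF lf assms(1) X_const] by simp
  then show ?thesis using lf_zero[OF lf fX] by simp
next
  case False
  then show ?thesis using phiP assms unfolding strictly_positive_def by force
qed

lemma phi_mono: assumes "x \<in> X" "y \<in> X" "AE \<omega> in M. x \<omega> \<le> y \<omega>" shows "\<phi> x \<le> \<phi> y"
proof -
  have "0 \<le> \<phi> (\<lambda>\<omega>. y \<omega> - x \<omega>)"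
    by (rule phi_pos[OF X_diff[OF assms(2,1)]]) (use assms(3) in auto)
  then show ?thesis using lf_diff[OF lf assms(2,1)] by simp
qed

lemma ind_X: "A \<in> sets M \<Longrightarrow> indicator A \<in> X"
  by (rule X_dom[OF _ X_const[of 1]]) (auto intro!: AE_I2 simp: indicator_def)

lemma phi_ind_nonneg: "A \<in> sets M \<Longrightarrow> 0 \<le> \<phi> (indicator A)"
  by (rule phi_pos[OF ind_X]) auto

lemma phi_ind_null: assumes A: "A \<in> sets M" shows "\<phi> (indicator A) = 0 \<longleftrightarrow> A \<in> null_sets M"
proof
  assume "A \<in> null_sets M"
  from AE_not_in[OF this] have "AE \<omega> in M. indicator A \<omega> = (0::real)" by eventually_elim simp
  then have "\<phi> (indicator A) = \<phi> (\<lambda>_. 0)" using lf_ae[OF lf ind_X[OF A] X_const] by simp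
  then show "\<phi> (indicator A) = 0" using lf_zero[OF lf fX] by simp
next
  assume z: "\<phi> (indicator A) = 0"
  show "A \<in> null_sets M"
  proof (rule ccontr)
    assume "A \<notin> null_sets M"
    then have "\<not> (AE \<omega> in M. \<omega> \<notin> A)" using AE_iff_null_sets[OF A] by simp
    then have "\<not> (AE \<omega> in M. indicator A \<omega> = (0::real))"
      by (metis (mono_tags, lifting) eventually_mono indicator_eq_0_iff)
    then have "0 < \<phi> (indicator A)" using phiP ind_X[OF A] unfolding strictly_positive_def by auto
    with z show False by simp
  qed
qed

definition "nu = measure_of (space M) (sets M) (\<lambda>A. ennreal (\<phi> (indicator A)))"

lemma ca: "countably_additive (sets M) (\<lambda>A. ennreal (\<phi> (indicator A)))"
  unfolding countably_additive_def
proof (intro allI impI)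
  fix A :: "nat \<Rightarrow> 'a set" assume A: "range A \<subseteq> sets M" and dj: "disjoint_family A"
    and U: "(\<Union>i. A i) \<in> sets M"
  define s where "s n = (\<lambda>\<omega>. \<Sum>i\<in>{..<n}. 1 * (indicator (A i) \<omega> :: real))" for n
  have s_eq: "s n \<omega> = indicator (\<Union>i<n. A i) \<omega>" for n \<omega>
  proof -
    have "disjoint_family_on A {..<n}" using dj disjoint_family_on_mono by blast
    from indicator_UN_disjoint[OF finite_lessThan this, of \<omega>]
    have "(indicator (\<Union>i<n. A i) \<omega> :: real) = (\<Sum>i<n. indicator (A i) \<omega>)" by simp
    then show ?thesis unfolding s_def by simp
  qed
  have sX: "s n \<in> X" for n unfolding s_def by (rule X_sum) (use A ind_X in auto)
  have phis: "\<phi> (s n) = (\<Sum>i<n. \<phi> (indicator (A i)))" for n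
    unfolding s_def using lf_sum[OF lf finite_lessThan[of n], of "\<lambda>i. indicator (A i)" "\<lambda>_. 1"] A ind_X by auto
  have "(\<lambda>n. \<phi> (s n)) \<longlonglongrightarrow> \<phi> (indicator (\<Union>i. A i))"
  proof (rule oc_seq[OF phiD sX ind_X[OF U] X_const[of 1]])
    show "AE \<omega> in M. (\<lambda>n. s n \<omega>) \<longlonglongrightarrow> indicator (\<Union>i. A i) \<omega>"
      by (rule AE_I2) (simp add: s_eq LIMSEQ_indicator_UN)
    show "AE \<omega> in M. \<bar>s n \<omega>\<bar> \<le> \<bar>1\<bar>" for n by (rule AE_I2) (simp add: s_eq indicator_def)
  qed
  then have "(\<lambda>i. \<phi> (indicator (A i))) sums \<phi> (indicator (\<Union>i. A i))"
    unfolding sums_def phis[symmetric] .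
  note S = this
  have sm: "summable (\<lambda>i. \<phi> (indicator (A i)))" by (rule sums_summable[OF S])
  have su: "(\<Sum>i. \<phi> (indicator (A i))) = \<phi> (indicator (\<Union>i. A i))" by (rule sums_unique[OF S, symmetric])
  show "(\<Sum>i. ennreal (\<phi> (indicator (A i)))) = ennreal (\<phi> (indicator (\<Union>i. A i)))"
  proof -
    have nn: "0 \<le> \<phi> (indicator (A i))" for i using A by (intro phi_ind_nonneg) auto
    show ?thesis unfolding su[symmetric] by (rule suminf_ennreal2[OF nn sm])
  qed
qed

lemma pos: "positive (sets M) (\<lambda>A. ennreal (\<phi> (indicator A)))"
proof -
  have ie: "indicator {} = (\<lambda>_. 0::real)" by (rule ext) simp
  show ?thesis unfolding positive_def by (subst ie) (simp add: lf_zero[OF lf fX])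
qed

lemma sets_nu[simp]: "sets nu = sets M"
  unfolding nu_def by (rule sigma_algebra.sets_measure_of_eq[OF sets.sigma_algebra_axioms])

lemma space_nu[simp]: "space nu = space M"
  unfolding nu_def by (rule sigma_algebra.space_measure_of_eq[OF sets.sigma_algebra_axioms])

lemma emeasure_nu: "A \<in> sets M \<Longrightarrow> emeasure nu A = ennreal (\<phi> (indicator A))"
  unfolding nu_def by (rule emeasure_measure_of_sigma[OF sets.sigma_algebra_axioms pos ca])

lemma measure_nu: "A \<in> sets M \<Longrightarrow> measure nu A = \<phi> (indicator A)"
  unfolding measure_def using emeasure_nu phi_ind_nonneg by simp

lemma fin_nu: "finite_measure nu"
  by (rule finite_measureI) (simp add: emeasure_nu)

lemma null_nu: "null_sets nu = null_sets M"
proof -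
  have "A \<in> null_sets nu \<longleftrightarrow> A \<in> null_sets M" for A
  proof (cases "A \<in> sets M")
    case True
    have "A \<in> null_sets nu \<longleftrightarrow> \<phi> (indicator A) = 0"
      using True emeasure_nu[OF True] phi_ind_nonneg[OF True] by (auto simp: null_sets_def)
    then show ?thesis using phi_ind_null[OF True] by simp
  next
    case False then show ?thesis by (auto simp: null_sets_def)
  qed
  then show ?thesis by blast
qed

lemma ae_nu: "ae_filter nu = ae_filter M"
  unfolding ae_filter_def null_nu space_nu ..

lemma AE_nu: "(AE x in nu. P x) \<longleftrightarrow> (AE x in M. P x)"
  by (subst ae_nu) (rule refl)

lemma meas_nu: "borel_measurable nu = borel_measurable M"
  by (rule measurable_cong_sets) auto

lemma rep_simple: assumes s: "simple_function M s"
  shows "s \<in> X" "integral\<^sup>L nu s = \<phi> s"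
proof -
  interpret fn: finite_measure nu by (rule fin_nu)
  let ?S = "s ` space M"
  let ?A = "\<lambda>y. s -` {y} \<inter> space M"
  have fin: "finite ?S" using s unfolding simple_function_def by auto
  have sets: "?A y \<in> sets M" for y
  proof (cases "y \<in> ?S")
    case True then show ?thesis using s unfolding simple_function_def by blast
  next
    case False then have "?A y = {}" by auto
    then show ?thesis by simp
  qed
  have eq: "s \<omega> = (\<Sum>y\<in>?S. y * indicator (?A y) \<omega>)" if "\<omega> \<in> space M" for \<omega>
  proof -
    have "s \<omega> = (\<Sum>y\<in>?S. indicator (?A y) \<omega> *\<^sub>R y)"
      using simple_function_indicator_representation_banach[OF s that] by blast
    also have "\<dots> = (\<Sum>y\<in>?S. y * indicator (?A y) \<omega>)"
      by (rule sum.cong) (simp_all add: real_scaleR_def)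
    finally show ?thesis .
  qed
  have sumX: "(\<lambda>\<omega>. \<Sum>y\<in>?S. y * indicator (?A y) \<omega>) \<in> X"
    by (rule X_sum[OF fin]) (use sets ind_X in auto)
  have sm: "s \<in> borel_measurable M" by (rule borel_measurable_simple_function[OF s])
  show sX: "s \<in> X"
    by (rule X_dom[OF sm sumX]) (rule AE_I2, metis eq order_refl)
  have "\<phi> s = \<phi> (\<lambda>\<omega>. \<Sum>y\<in>?S. y * indicator (?A y) \<omega>)"
    by (rule lf_ae[OF lf sX sumX]) (rule AE_I2, rule eq)
  also have "\<dots> = (\<Sum>y\<in>?S. y * \<phi> (indicator (?A y)))"
    by (rule lf_sum[OF lf fin]) (use sets ind_X in auto)
  also have "\<dots> = (\<Sum>y\<in>?S. y * measure nu (?A y))"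
    using sets measure_nu by simp
  also have "\<dots> = integral\<^sup>L nu (\<lambda>\<omega>. \<Sum>y\<in>?S. y * indicator (?A y) \<omega>)"
  proof (subst Bochner_Integration.integral_sum)
    show "integrable nu (\<lambda>\<omega>. y * indicator (?A y) \<omega>)" for y
      using sets by (intro integrable_mult_right integrable_real_indicator) (auto simp: less_top[symmetric])
    show "(\<Sum>y\<in>?S. y * measure nu (?A y)) = (\<Sum>y\<in>?S. integral\<^sup>L nu (\<lambda>\<omega>. y * indicator (?A y) \<omega>))"
      using sets by (intro sum.cong refl) (simp add: Int_absorb2 sets.sets_into_space)
  qed
  also have "\<dots> = integral\<^sup>L nu s"
    by (rule Bochner_Integration.integral_cong[OF refl]) (metis eq space_nu)
  finally show "integral\<^sup>L nu s = \<phi> s" by simp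
qed

lemma rep_bdd: assumes b: "b \<in> borel_measurable M" and C: "\<And>\<omega>. \<bar>b \<omega>\<bar> \<le> C"
  shows "b \<in> X" "integral\<^sup>L nu b = \<phi> b"
proof -
  interpret fn: finite_measure nu by (rule fin_nu)
  show bX: "b \<in> X" by (rule X_dom[OF b X_const[of C]]) (rule AE_I2, use C in \<open>smt (verit) abs_ge_zero\<close>)
  obtain F where F: "\<And>i. simple_function M (F i)" "\<And>x. x \<in> space M \<Longrightarrow> (\<lambda>i. F i x) \<longlonglongrightarrow> b x"
    "\<And>i x. x \<in> space M \<Longrightarrow> dist (F i x) 0 \<le> 2 * dist (b x) 0"
    using borel_measurable_implies_sequence_metric[OF b, of 0] by blast
  have FX: "F i \<in> X" for i by (rule rep_simple(1)[OF F(1)])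
  have Fb: "\<bar>F i x\<bar> \<le> 2 * C" if "x \<in> space M" for i x
    using F(3)[OF that, of i] C[of x] by simp
  have "(\<lambda>i. \<phi> (F i)) \<longlonglongrightarrow> \<phi> b"
  proof (rule oc_seq[OF phiD FX bX X_const[of "2*C"]])
    show "AE \<omega> in M. (\<lambda>n. F n \<omega>) \<longlonglongrightarrow> b \<omega>" by (rule AE_I2) (rule F(2))
    show "AE \<omega> in M. \<bar>F n \<omega>\<bar> \<le> \<bar>2 * C\<bar>" for n by (rule AE_I2) (use Fb in \<open>meson abs_ge_self order_trans\<close>)
  qed
  moreover have "(\<lambda>i. integral\<^sup>L nu (F i)) \<longlonglongrightarrow> integral\<^sup>L nu b"
  proof (rule integral_dominated_convergence[where w = "\<lambda>_. 2 * C"])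
    show "b \<in> borel_measurable nu" unfolding meas_nu by (rule b)
    show "F i \<in> borel_measurable nu" for i unfolding meas_nu using borel_measurable_simple_function[OF F(1)] .
    show "integrable nu (\<lambda>_. 2 * C)" by simp
    show "AE x in nu. (\<lambda>i. F i x) \<longlonglongrightarrow> b x" by (rule AE_I2) (use F(2) in simp)
    show "AE x in nu. norm (F i x) \<le> 2 * C" for i by (rule AE_I2) (use Fb in simp)
  qed
  moreover have "integral\<^sup>L nu (F i) = \<phi> (F i)" for i by (rule rep_simple(2)[OF F(1)])
  ultimately show "integral\<^sup>L nu b = \<phi> b" using LIMSEQ_unique by fastforce
qed

lemma rep: assumes x: "x \<in> X" shows "integrable nu x" "integral\<^sup>L nu x = \<phi> x"
proof -
  interpret fn: finite_measure nu by (rule fin_nu)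
  have xm: "x \<in> borel_measurable M" by (rule X_meas[OF x])
  define a where "a = (\<lambda>\<omega>. \<bar>x \<omega>\<bar>)"
  have aX: "a \<in> X" unfolding a_def by (rule X_abs[OF x])
  define m where "m n = (\<lambda>\<omega>. min (real n) (a \<omega>))" for n
  have mm: "m n \<in> borel_measurable M" for n unfolding m_def a_def using xm by measurable
  have mb: "\<bar>m n \<omega>\<bar> \<le> real n" for n \<omega> unfolding m_def a_def by auto
  have mX: "m n \<in> X" for n by (rule rep_bdd(1)[OF mm mb])
  have mint: "integral\<^sup>L nu (m n) = \<phi> (m n)" for n by (rule rep_bdd(2)[OF mm mb])
  have mlim: "(\<lambda>n. m n \<omega>) \<longlonglongrightarrow> a \<omega>" for \<omega> unfolding m_def by (rule min_lim)
  have "integrable nu a"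
  proof (rule integrable_monotone_convergence[where f = m and x = "\<phi> a"])
    show "integrable nu (m i)" for i
      by (rule fn.integrable_const_bound[where B = "real i"]) (use mb mm in \<open>auto simp: meas_nu\<close>)
    show "AE x in nu. mono (\<lambda>n. m n x)"
      by (rule AE_I2) (auto simp: m_def mono_def intro: min.mono)
    show "AE x in nu. (\<lambda>i. m i x) \<longlonglongrightarrow> a x" by (rule AE_I2) (rule mlim)
    show "(\<lambda>i. integral\<^sup>L nu (m i)) \<longlonglongrightarrow> \<phi> a"
      unfolding mint
      by (rule oc_seq[OF phiD mX aX aX]) (auto intro!: AE_I2 min_lim simp: m_def a_def)
    show "a \<in> borel_measurable nu" unfolding meas_nu a_def using xm by measurable
  qed
  then show xi: "integrable nu x"
    by (rule integrable_abs_cancel[of nu x, folded a_def]) (unfold meas_nu, rule xm)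
  define t where "t n = (\<lambda>\<omega>. max (- real n) (min (real n) (x \<omega>)))" for n
  have tm: "t n \<in> borel_measurable M" for n unfolding t_def using xm by measurable
  have tb: "\<bar>t n \<omega>\<bar> \<le> real n" for n \<omega> unfolding t_def by auto
  have tX: "t n \<in> X" for n by (rule rep_bdd(1)[OF tm tb])
  have tint: "integral\<^sup>L nu (t n) = \<phi> (t n)" for n by (rule rep_bdd(2)[OF tm tb])
  have tlim: "(\<lambda>n. t n \<omega>) \<longlonglongrightarrow> x \<omega>" for \<omega> unfolding t_def by (rule clip_lim)
  have tx: "\<bar>t n \<omega>\<bar> \<le> \<bar>x \<omega>\<bar>" for n \<omega> unfolding t_def by auto
  have "(\<lambda>n. \<phi> (t n)) \<longlonglongrightarrow> \<phi> x"
    by (rule oc_seq[OF phiD tX x x]) (auto intro!: AE_I2 tlim tx)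
  moreover have "(\<lambda>n. integral\<^sup>L nu (t n)) \<longlonglongrightarrow> integral\<^sup>L nu x"
  proof (rule integral_dominated_convergence[where w = a])
    show "x \<in> borel_measurable nu" unfolding meas_nu by (rule xm)
    show "t i \<in> borel_measurable nu" for i unfolding meas_nu by (rule tm)
    show "integrable nu a" by fact
    show "AE \<omega> in nu. (\<lambda>i. t i \<omega>) \<longlonglongrightarrow> x \<omega>" by (rule AE_I2) (rule tlim)
    show "AE \<omega> in nu. norm (t i \<omega>) \<le> a \<omega>" for i by (rule AE_I2) (simp add: a_def tx)
  qed
  ultimately show "integral\<^sup>L nu x = \<phi> x" unfolding tint using LIMSEQ_unique by blast
qed

end



lemma mult_sgn_self: "(t::real) * sgn t = \<bar>t\<bar>"
  by (simp add: sgn_if abs_if)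

context stg2 begin

lemma meas_nu_real: "((x::'a\<Rightarrow>real) \<in> borel_measurable nu) \<longleftrightarrow> (x \<in> borel_measurable M)"
  by (simp only: meas_nu)

lemma subalg_nu: "subalgebra nu (sigma_of M f)"
  unfolding subalgebra_def using G_space G_sub by auto

lemma fms: "finite_measure_subalgebra nu (sigma_of M f)"
  unfolding finite_measure_subalgebra_def finite_measure_subalgebra_axioms_def
  using fin_nu subalg_nu by auto

lemma mult_bdd_X:
  assumes x: "x \<in> X" and wm: "w \<in> borel_measurable M" and wb: "AE \<omega> in M. \<bar>w \<omega>\<bar> \<le> 2"
  shows "(\<lambda>\<omega>. x \<omega> * w \<omega>) \<in> X"
proof (rule X_dom[OF _ X_smul[OF x, of 2]])
  show "(\<lambda>\<omega>. x \<omega> * w \<omega>) \<in> borel_measurable M" using X_meas[OF x] wm by measurable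
  show "AE \<omega> in M. \<bar>x \<omega> * w \<omega>\<bar> \<le> \<bar>2 * x \<omega>\<bar>" using wb
  proof eventually_elim
    case (elim \<omega>)
    have "\<bar>x \<omega> * w \<omega>\<bar> = \<bar>x \<omega>\<bar> * \<bar>w \<omega>\<bar>" by (simp add: abs_mult)
    also have "\<dots> \<le> \<bar>x \<omega>\<bar> * 2" using elim by (intro mult_left_mono) auto
    finally show ?case by (simp add: abs_mult)
  qed
qed

lemma mult_functional:
  assumes wm: "w \<in> borel_measurable M" and wb: "AE \<omega> in M. \<bar>w \<omega>\<bar> \<le> 2"
  shows "(\<lambda>x. \<phi> (\<lambda>\<omega>. x \<omega> * w \<omega>)) \<in> order_dual_n M X"
proof -
  let ?m = "\<lambda>x \<omega>. x \<omega> * w \<omega>"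
  have mX: "?m x \<in> X" if "x \<in> X" for x by (rule mult_bdd_X[OF that wm wb])
  have oc: "order_continuous M X \<phi>" using phiD unfolding order_dual_n_def by auto
  have "lin_functional M X (\<lambda>x. \<phi> (?m x))"
    unfolding lin_functional_def
  proof (intro conjI ballI allI impI)
    fix x y assume x: "x \<in> X" and y: "y \<in> X" and ae: "AE \<omega> in M. x \<omega> = y \<omega>"
    show "\<phi> (?m x) = \<phi> (?m y)" by (rule lf_ae[OF lf mX[OF x] mX[OF y]]) (use ae in auto)
  next
    fix x y assume x: "x \<in> X" and y: "y \<in> X"
    have "?m (\<lambda>\<omega>. x \<omega> + y \<omega>) = (\<lambda>\<omega>. ?m x \<omega> + ?m y \<omega>)" by (simp add: distrib_right)
    then show "\<phi> (?m (\<lambda>\<omega>. x \<omega> + y \<omega>)) = \<phi> (?m x) + \<phi> (?m y)"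
      using lf_add[OF lf mX[OF x] mX[OF y]] by simp
  next
    fix c :: real and x assume x: "x \<in> X"
    have "?m (\<lambda>\<omega>. c * x \<omega>) = (\<lambda>\<omega>. c * ?m x \<omega>)" by (simp add: mult.assoc)
    then show "\<phi> (?m (\<lambda>\<omega>. c * x \<omega>)) = c * \<phi> (?m x)"
      using lf_smul[OF lf mX[OF x]] by simp
  qed
  moreover have "order_continuous M X (\<lambda>x. \<phi> (?m x))"
    unfolding order_continuous_def
  proof (intro allI impI)
    fix F assume evX: "eventually (\<lambda>x. x \<in> X) F" and conv: "order_conv M X F (\<lambda>_. 0)"
    obtain Z where Z: "decr_to_zero M X Z" and ZF: "\<forall>z\<in>Z. eventually (\<lambda>x. AE \<omega> in M. \<bar>x \<omega> - 0\<bar> \<le> z \<omega>) F"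
      using conv unfolding order_conv_def by blast
    define Z' where "Z' = (\<lambda>z \<omega>. 2 * z \<omega>) ` Z"
    have ZX: "Z \<subseteq> X" using Z unfolding decr_to_zero_def by auto
    have dz: "decr_to_zero M X Z'"
      unfolding decr_to_zero_def
    proof (intro conjI ballI impI)
      show "Z' \<subseteq> X" unfolding Z'_def using ZX X_smul by auto
      show "Z' \<noteq> {}" unfolding Z'_def using Z unfolding decr_to_zero_def by auto
    next
      fix z1 z2 assume "z1 \<in> Z'" "z2 \<in> Z'"
      then obtain y1 y2 where y: "y1 \<in> Z" "y2 \<in> Z" "z1 = (\<lambda>\<omega>. 2 * y1 \<omega>)" "z2 = (\<lambda>\<omega>. 2 * y2 \<omega>)"
        unfolding Z'_def by auto
      then obtain y3 where y3: "y3 \<in> Z" "AE \<omega> in M. y3 \<omega> \<le> y1 \<omega>" "AE \<omega> in M. y3 \<omega> \<le> y2 \<omega>"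
        using Z unfolding decr_to_zero_def by blast
      show "\<exists>z3\<in>Z'. (AE \<omega> in M. z3 \<omega> \<le> z1 \<omega>) \<and> (AE \<omega> in M. z3 \<omega> \<le> z2 \<omega>)"
        unfolding Z'_def using y y3 by (intro bexI[of _ "\<lambda>\<omega>. 2 * y3 \<omega>"]) (auto elim: eventually_mono)
    next
      fix z assume "z \<in> Z'"
      then show "AE \<omega> in M. 0 \<le> z \<omega>" using Z unfolding Z'_def decr_to_zero_def by (auto elim: eventually_mono)
    next
      fix v assume v: "v \<in> X" and vz: "\<forall>z\<in>Z'. AE \<omega> in M. v \<omega> \<le> z \<omega>"
      have "AE \<omega> in M. (1/2) * v \<omega> \<le> 0"
      proof -
        have "\<forall>z\<in>Z. AE \<omega> in M. (1/2) * v \<omega> \<le> z \<omega>"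
        proof
          fix z assume "z \<in> Z"
          then have "AE \<omega> in M. v \<omega> \<le> 2 * z \<omega>" using vz unfolding Z'_def by auto
          then show "AE \<omega> in M. (1/2) * v \<omega> \<le> z \<omega>" by (rule eventually_mono) auto
        qed
        moreover have "\<forall>w\<in>X. (\<forall>z\<in>Z. AE \<omega> in M. w \<omega> \<le> z \<omega>) \<longrightarrow> (AE \<omega> in M. w \<omega> \<le> 0)"
          using Z unfolding decr_to_zero_def by blast
        ultimately show ?thesis using bspec[OF _ X_smul[OF v, of "1/2"]] by blast
      qed
      then show "AE \<omega> in M. v \<omega> \<le> 0" by (rule eventually_mono) auto
    qed
    have "order_conv M X (filtermap ?m F) (\<lambda>_. 0)"
      unfolding order_conv_def
    proof (intro conjI exI[of _ Z'])
      show "(\<lambda>_. 0) \<in> X" by (rule X_const)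
      show "decr_to_zero M X Z'" by (rule dz)
      show "\<forall>z\<in>Z'. \<forall>\<^sub>F x in filtermap ?m F. AE \<omega> in M. \<bar>x \<omega> - 0\<bar> \<le> z \<omega>"
      proof
        fix z' assume "z' \<in> Z'"
        then obtain z where z: "z \<in> Z" "z' = (\<lambda>\<omega>. 2 * z \<omega>)" unfolding Z'_def by auto
        have ev: "eventually (\<lambda>x. AE \<omega> in M. \<bar>x \<omega> - 0\<bar> \<le> z \<omega>) F" using ZF z(1) by blast
        show "\<forall>\<^sub>F x in filtermap ?m F. AE \<omega> in M. \<bar>x \<omega> - 0\<bar> \<le> z' \<omega>"
          unfolding eventually_filtermap z(2)
          using ev
        proof (rule eventually_mono)
          fix x assume "AE \<omega> in M. \<bar>x \<omega> - 0\<bar> \<le> z \<omega>"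
          then show "AE \<omega> in M. \<bar>x \<omega> * w \<omega> - 0\<bar> \<le> 2 * z \<omega>" using wb
          proof eventually_elim
            case (elim \<omega>)
            have "\<bar>x \<omega> * w \<omega>\<bar> = \<bar>x \<omega>\<bar> * \<bar>w \<omega>\<bar>" by (simp add: abs_mult)
            also have "\<dots> \<le> z \<omega> * 2" using elim by (intro mult_mono) auto
            finally show ?case by simp
          qed
        qed
      qed
    qed
    moreover have "eventually (\<lambda>x. x \<in> X) (filtermap ?m F)"
      unfolding eventually_filtermap using evX by (rule eventually_mono) (rule mX)
    ultimately have "(\<phi> \<longlongrightarrow> 0) (filtermap ?m F)" using oc unfolding order_continuous_def by blast
    then show "((\<lambda>x. \<phi> (?m x)) \<longlongrightarrow> 0) F" unfolding filterlim_filtermap .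
  qed
  ultimately show ?thesis unfolding order_dual_n_def by blast
qed

lemma sep:
  assumes gX: "g \<in> X" and gG: "g \<notin> borel_measurable (sigma_of M f)"
  shows "\<exists>\<psi>\<in>order_dual_n M X. \<psi> g \<noteq> 0 \<and> (\<forall>q\<in>O_span f. \<psi> q = 0)"
proof -
  interpret fmsub: finite_measure_subalgebra nu "sigma_of M f" by (rule fms)
  interpret fn: finite_measure nu by (rule fin_nu)
  let ?G = "sigma_of M f"
  have gm: "g \<in> borel_measurable M" by (rule X_meas[OF gX])
  have gi: "integrable nu g" by (rule rep(1)[OF gX])
  define h where "h = real_cond_exp nu ?G g"
  have hG: "h \<in> borel_measurable ?G" unfolding h_def by (rule borel_measurable_cond_exp)
  have hm: "h \<in> borel_measurable M" unfolding h_def using borel_measurable_cond_exp2[of nu ?G g] meas_nu_real by simp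
  have hi: "integrable nu h" unfolding h_def by (rule fmsub.real_cond_exp_int(1)[OF gi])
  define u where "u = (\<lambda>\<omega>. sgn (g \<omega> - h \<omega>))"
  have um: "u \<in> borel_measurable M" unfolding u_def using gm hm by measurable
  have ub: "\<bar>u \<omega>\<bar> \<le> 1" for \<omega> unfolding u_def by (simp add: sgn_if)
  have ui: "integrable nu u"
    by (rule fmsub.integrable_const_bound[where B = 1]) (use ub um meas_nu_real in auto)
  define v where "v = real_cond_exp nu ?G u"
  have vG: "v \<in> borel_measurable ?G" unfolding v_def by (rule borel_measurable_cond_exp)
  have vm: "v \<in> borel_measurable M" unfolding v_def using borel_measurable_cond_exp2[of nu ?G u] meas_nu_real by simp
  have vb_nu: "AE \<omega> in nu. \<bar>v \<omega>\<bar> \<le> 1"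
  proof -
    have "AE \<omega> in nu. v \<omega> \<le> 1" unfolding v_def
      by (rule fmsub.real_cond_exp_le_c[OF ui]) (rule AE_I2, use ub in \<open>simp add: abs_le_iff\<close>)
    moreover have "AE \<omega> in nu. -1 \<le> v \<omega>" unfolding v_def
      by (rule fmsub.real_cond_exp_ge_c[OF ui]) (rule AE_I2, use ub in \<open>simp add: abs_le_iff\<close>)
    ultimately show ?thesis by eventually_elim auto
  qed
  then have vb: "AE \<omega> in M. \<bar>v \<omega>\<bar> \<le> 1" by (simp add: AE_nu)
  define w where "w = (\<lambda>\<omega>. u \<omega> - v \<omega>)"
  have wm: "w \<in> borel_measurable M" unfolding w_def using um vm by measurable
  have wb: "AE \<omega> in M. \<bar>w \<omega>\<bar> \<le> 2" using vb
  proof eventually_elim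
    case (elim \<omega>) then show ?case using ub[of \<omega>] unfolding w_def by linarith
  qed
  define \<psi> where "\<psi> = (\<lambda>x. \<phi> (\<lambda>\<omega>. x \<omega> * w \<omega>))"
  have \<psi>D: "\<psi> \<in> order_dual_n M X" unfolding \<psi>_def by (rule mult_functional[OF wm wb])
  have \<psi>int: "\<psi> x = integral\<^sup>L nu (\<lambda>\<omega>. x \<omega> * u \<omega>) - integral\<^sup>L nu (\<lambda>\<omega>. x \<omega> * v \<omega>)"
    if x: "x \<in> X" and xuv: "integrable nu (\<lambda>\<omega>. x \<omega> * u \<omega>)" "integrable nu (\<lambda>\<omega>. x \<omega> * v \<omega>)" for x
  proof -
    have "\<psi> x = integral\<^sup>L nu (\<lambda>\<omega>. x \<omega> * w \<omega>)"
      unfolding \<psi>_def by (rule rep(2)[symmetric]) (rule mult_bdd_X[OF x wm wb])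
    also have "\<dots> = integral\<^sup>L nu (\<lambda>\<omega>. x \<omega> * u \<omega> - x \<omega> * v \<omega>)"
      unfolding w_def by (simp add: right_diff_distrib)
    also have "\<dots> = integral\<^sup>L nu (\<lambda>\<omega>. x \<omega> * u \<omega>) - integral\<^sup>L nu (\<lambda>\<omega>. x \<omega> * v \<omega>)"
      by (rule Bochner_Integration.integral_diff[OF xuv])
    finally show ?thesis .
  qed
  have xu_int: "integrable nu (\<lambda>\<omega>. x \<omega> * u \<omega>)" if x: "integrable nu x" for x
  proof (rule Bochner_Integration.integrable_bound[OF x])
    show "(\<lambda>\<omega>. x \<omega> * u \<omega>) \<in> borel_measurable nu"
    proof -
      have "u \<in> borel_measurable nu" using um meas_nu_real by simp
      then show ?thesis using borel_measurable_integrable[OF x] by (intro borel_measurable_times)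
    qed
    show "AE \<omega> in nu. norm (x \<omega> * u \<omega>) \<le> norm (x \<omega>)"
      by (rule AE_I2) (use ub in \<open>auto simp: abs_mult intro: mult_left_le\<close>)
  qed
  have vx_int: "integrable nu (\<lambda>\<omega>. v \<omega> * x \<omega>)" if x: "integrable nu x" for x
  proof (rule Bochner_Integration.integrable_bound[OF x])
    show "(\<lambda>\<omega>. v \<omega> * x \<omega>) \<in> borel_measurable nu"
    proof -
      have "v \<in> borel_measurable nu" using vm meas_nu_real by simp
      then show ?thesis using borel_measurable_integrable[OF x] by (intro borel_measurable_times)
    qed
    show "AE \<omega> in nu. norm (v \<omega> * x \<omega>) \<le> norm (x \<omega>)"
      using vb_nu by eventually_elim (auto simp: abs_mult intro: mult_left_le_one_le)
  qed
  have \<psi>Q: "\<psi> q = 0" if qX: "q \<in> X" and qG: "q \<in> borel_measurable ?G" for q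
  proof -
    have qi: "integrable nu q" by (rule rep(1)[OF qX])
    have qu: "integrable nu (\<lambda>\<omega>. q \<omega> * u \<omega>)" by (rule xu_int[OF qi])
    have "integrable nu (\<lambda>\<omega>. q \<omega> * v \<omega>)" "integral\<^sup>L nu (\<lambda>\<omega>. q \<omega> * v \<omega>) = integral\<^sup>L nu (\<lambda>\<omega>. q \<omega> * u \<omega>)"
      unfolding v_def using fmsub.real_cond_exp_intg[OF qu qG] um meas_nu_real by auto
    then show ?thesis using \<psi>int[OF qX qu] by simp
  qed
  have "\<psi> g \<noteq> 0"
  proof
    assume z: "\<psi> g = 0"
    have gu: "integrable nu (\<lambda>\<omega>. g \<omega> * u \<omega>)" by (rule xu_int[OF gi])
    have vg: "integrable nu (\<lambda>\<omega>. v \<omega> * g \<omega>)" by (rule vx_int[OF gi])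
    have hu: "integrable nu (\<lambda>\<omega>. h \<omega> * u \<omega>)" by (rule xu_int[OF hi])
    have gv: "integrable nu (\<lambda>\<omega>. g \<omega> * v \<omega>)" using vg by (simp add: mult.commute)
    have e1: "integral\<^sup>L nu (\<lambda>\<omega>. v \<omega> * h \<omega>) = integral\<^sup>L nu (\<lambda>\<omega>. v \<omega> * g \<omega>)"
      unfolding h_def using fmsub.real_cond_exp_intg(2)[OF vg vG] gm meas_nu_real by simp
    have e2: "integral\<^sup>L nu (\<lambda>\<omega>. h \<omega> * v \<omega>) = integral\<^sup>L nu (\<lambda>\<omega>. h \<omega> * u \<omega>)"
      unfolding v_def using fmsub.real_cond_exp_intg(2)[OF hu hG] um meas_nu_real by simp
    have "integral\<^sup>L nu (\<lambda>\<omega>. g \<omega> * v \<omega>) = integral\<^sup>L nu (\<lambda>\<omega>. h \<omega> * u \<omega>)"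
      using e1 e2 by (simp add: mult.commute)
    then have "0 = integral\<^sup>L nu (\<lambda>\<omega>. g \<omega> * u \<omega>) - integral\<^sup>L nu (\<lambda>\<omega>. h \<omega> * u \<omega>)"
      using z \<psi>int[OF gX gu gv] by simp
    also have "\<dots> = integral\<^sup>L nu (\<lambda>\<omega>. g \<omega> * u \<omega> - h \<omega> * u \<omega>)"
      by (rule Bochner_Integration.integral_diff[OF gu hu, symmetric])
    also have "\<dots> = integral\<^sup>L nu (\<lambda>\<omega>. \<bar>g \<omega> - h \<omega>\<bar>)"
      unfolding u_def by (simp add: left_diff_distrib[symmetric] mult_sgn_self)
    finally have "integral\<^sup>L nu (\<lambda>\<omega>. \<bar>g \<omega> - h \<omega>\<bar>) = 0" by simp
    moreover have "integrable nu (\<lambda>\<omega>. \<bar>g \<omega> - h \<omega>\<bar>)" using gi hi by auto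
    moreover have "AE \<omega> in nu. 0 \<le> \<bar>g \<omega> - h \<omega>\<bar>" by (rule AE_I2) simp
    ultimately have "AE \<omega> in nu. \<bar>g \<omega> - h \<omega>\<bar> = 0"
      using integral_nonneg_eq_0_iff_AE[of nu "\<lambda>\<omega>. \<bar>g \<omega> - h \<omega>\<bar>"] by simp
    then have "AE \<omega> in M. g \<omega> = h \<omega>" by (simp add: AE_nu)
    then have "g \<in> borel_measurable ?G" by (rule G_ae[OF hG gm])
    with gG show False by simp
  qed
  moreover have "\<forall>q\<in>O_span f. \<psi> q = 0" using \<psi>Q O_X O_G by auto
  ultimately show ?thesis using \<psi>D by blast
qed

lemma Wk_Q: assumes g: "g \<in> Wk" shows "g \<in> borel_measurable (sigma_of M f)"
proof (rule ccontr)
  assume nG: "g \<notin> borel_measurable (sigma_of M f)"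
  have gX: "g \<in> X" using g Wk_X by auto
  obtain \<psi> where \<psi>: "\<psi> \<in> order_dual_n M X" "\<psi> g \<noteq> 0" "\<forall>q\<in>O_span f. \<psi> q = 0"
    using sep[OF gX nG] by blast
  define U where "U = {x \<in> X. \<psi> x \<in> - {0}}"
  have op: "openin (weak_top M X) U"
    unfolding U_def by (rule weak_basic[OF \<psi>(1)]) auto
  have gU: "g \<in> U" using gX \<psi>(2) unfolding U_def by auto
  have "\<forall>T. g \<in> T \<and> openin (weak_top M X) T \<longrightarrow> (\<exists>y. y \<in> O_span f \<and> y \<in> T)"
    using g unfolding Wk_def in_closure_of by blast
  then obtain y where "y \<in> O_span f" "y \<in> U" using gU op by blast
  then show False using \<psi>(3) unfolding U_def by auto
qed

end


theorem theorem3p1: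
  fixes M :: "'a measure" and X :: "('a \<Rightarrow> real) set" and f g :: "'a \<Rightarrow> real"
  assumes "prob_space M"
    and "L0_ideal M X"
    and "\<forall>c::real. (\<lambda>_. c) \<in> X"
    and "\<exists>\<phi>. \<phi> \<in> order_dual_n M X \<and> strictly_positive M X \<phi>"
    and "f \<in> X" and "AE \<omega> in M. 0 \<le> f \<omega>"
    and "g \<in> X"
  shows "(g \<in> borel_measurable (sigma_of M f) \<longleftrightarrow> g \<in> weak_top M X closure_of O_span f)
    \<and> (g \<in> weak_top M X closure_of O_span f \<longleftrightarrow>
         (\<exists>gs. (\<forall>n. gs n \<in> O_span f) \<and> (AE \<omega> in M. (\<lambda>n. gs n \<omega>) \<longlonglongrightarrow> g \<omega>)))"
proof -
  obtain \<phi> where \<phi>: "\<phi> \<in> order_dual_n M X" "strictly_positive M X \<phi>" using assms(4) by blast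
  interpret S: stg2 M X f \<phi>
    by (rule stg2.intro[OF stg.intro[OF assms(1,2,3,5)] stg2_axioms.intro[OF \<phi>]])
  have W: "weak_top M X closure_of O_span f = S.Wk" by (simp add: S.Wk_def)
  have a_b: "g \<in> borel_measurable (sigma_of M f) \<longleftrightarrow> g \<in> weak_top M X closure_of O_span f"
    unfolding W using S.Q_Wk[OF assms(7)] S.Wk_Q by blast
  have b_c: "g \<in> weak_top M X closure_of O_span f \<longleftrightarrow>
         (\<exists>gs. (\<forall>n. gs n \<in> O_span f) \<and> (AE \<omega> in M. (\<lambda>n. gs n \<omega>) \<longlonglongrightarrow> g \<omega>))"
  proof
    assume "g \<in> weak_top M X closure_of O_span f"
    then have "g \<in> borel_measurable (sigma_of M f)" using a_b by blast
    then have "g \<in> S.Cp" by (rule S.Q_Cp[OF assms(7)])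
    then show "\<exists>gs. (\<forall>n. gs n \<in> O_span f) \<and> (AE \<omega> in M. (\<lambda>n. gs n \<omega>) \<longlonglongrightarrow> g \<omega>)"
      by (rule S.Cp_seq)
  next
    assume "\<exists>gs. (\<forall>n. gs n \<in> O_span f) \<and> (AE \<omega> in M. (\<lambda>n. gs n \<omega>) \<longlonglongrightarrow> g \<omega>)"
    then obtain gs where gs: "\<And>n. gs n \<in> O_span f" "AE \<omega> in M. (\<lambda>n. gs n \<omega>) \<longlonglongrightarrow> g \<omega>" by blast
    have "g \<in> borel_measurable (sigma_of M f)" by (rule S.seq_Q[OF assms(7) gs])
    then show "g \<in> weak_top M X closure_of O_span f" using a_b by blast
  qed
  show ?thesis using a_b b_c by blast
qed

end
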